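(* Let $k\ge 3$ and let $H=(V,E)$ be a hypergraph all of whose hyperedges have size between $2$ and $k$. If the real number $\beta$ satisfies $$-\frac{1}{2^{k-1}-1}\le\beta\le\frac{1}{2^{k-1}\cos^{k-1}\!\left(\frac{\pi}{k-1}\right)+1},$$ then every complex zero of the polynomial $\lambda\mapsto Z_H^{\beta}(\lambda)$ lies on the unit circle $\{|\lambda|=1\}$. Conversely, if $\beta\neq 1$ is a real number not in this range, then there exists a hypergraph $H$ with all hyperedges of size at most $k$ such that some zero of $Z_H^{\beta}(\lambda)$ does not lie on the unit circle.
   Context: For a hypergraph $H=(V,E)$ (hyperedges are subsets of $V$), edge activity $\beta\in\mathbb R$ and $\lambda\in\mathbb C$, the Ising partition function is $Z_H^{\beta}(\lambda)=\sum_{S\subseteq V}\beta^{|E(S,\overline S)|}\lambda^{|S|}$, where $E(S,\overline S)$ is the set of hyperedges containing at least one vertex of $S$ and at least one vertex of $V\setminus S$. *)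

theory Defs
  imports Complex_Main
begin

definition cut_edges :: "'a set \<Rightarrow> 'a set set \<Rightarrow> 'a set \<Rightarrow> 'a set set" where
  "cut_edges V E S = {e \<in> E. e \<inter> S \<noteq> {} \<and> e \<inter> (V - S) \<noteq> {}}"

definition ising_Z :: "'a set \<Rightarrow> 'a set set \<Rightarrow> real \<Rightarrow> complex \<Rightarrow> complex" where
  "ising_Z V E b z = (\<Sum>S\<in>Pow V. (complex_of_real b) ^ card (cut_edges V E S) * z ^ card S)"

definition hypergraph :: "'a set \<Rightarrow> 'a set set \<Rightarrow> bool" where
  "hypergraph V E \<longleftrightarrow> finite V \<and> (\<forall>e\<in>E. e \<subseteq> V)"

end

theory Submission
  imports Defs "HOL-Complex_Analysis.Complex_Analysis" "HOL-Computational_Algebra.Fundamental_Theorem_Algebra"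
begin


lemma affine_nz_bound:
  fixes \<alpha> \<beta> :: complex
  assumes "\<forall>x. cmod x < 1 \<longrightarrow> \<alpha> + \<beta> * x \<noteq> 0"
  shows "cmod \<beta> \<le> cmod \<alpha>"
proof (rule ccontr)
  assume "\<not> cmod \<beta> \<le> cmod \<alpha>"
  hence lt: "cmod \<alpha> < cmod \<beta>" by simp
  hence "\<beta> \<noteq> 0" by auto
  define x where "x = - \<alpha> / \<beta>"
  have "cmod x < 1" using lt \<open>\<beta> \<noteq> 0\<close> by (simp add: x_def norm_divide divide_less_eq)
  moreover have "\<alpha> + \<beta> * x = 0" using \<open>\<beta> \<noteq> 0\<close> by (simp add: x_def)
  ultimately show False using assms by blast
qed

lemma para_law: "(cmod (x + y))\<^sup>2 + (cmod (x - y))\<^sup>2 = 2 * (cmod x)\<^sup>2 + 2 * (cmod y)\<^sup>2"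
  unfolding cmod_power2 by (simp add: power2_eq_square algebra_simps)

lemma asano_point:
  fixes AA BB CC DD :: complex
  assumes H: "\<forall>s t. cmod s < 1 \<longrightarrow> cmod t < 1 \<longrightarrow> AA + BB* s + CC* t + DD* s* t \<noteq> 0"
    and u: "cmod u < 1"
  shows "AA + DD* u \<noteq> 0"
proof -
  have A0: "AA \<noteq> 0" using H[rule_format, of 0 0] by simp
  have b1: "cmod (CC + DD* s) \<le> cmod (AA + BB* s)" if "cmod s < 1" for s
  proof (rule affine_nz_bound, intro allI impI)
    fix t :: complex assume t: "cmod t < 1"
    have "AA + BB* s + CC* t + DD* s* t \<noteq> 0" using H t that by blast
    moreover have "AA + BB* s + (CC + DD* s)* t = AA + BB* s + CC* t + DD* s* t" by (simp add: algebra_simps)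
    ultimately show "AA + BB* s + (CC + DD* s)* t \<noteq> 0" by metis
  qed
  have b2: "cmod (BB + DD* t) \<le> cmod (AA + CC* t)" if "cmod t < 1" for t
  proof (rule affine_nz_bound, intro allI impI)
    fix s :: complex assume s: "cmod s < 1"
    have "AA + BB* s + CC* t + DD* s* t \<noteq> 0" using H s that by blast
    moreover have "AA + CC* t + (BB + DD* t)* s = AA + BB* s + CC* t + DD* s* t" by (simp add: algebra_simps)
    ultimately show "AA + CC* t + (BB + DD* t)* s \<noteq> 0" by metis
  qed
  have key: "cmod DD * r \<le> cmod AA" if r: "0 \<le> r" "r < 1" for r :: real
  proof -
    let ?r = "complex_of_real r"
    have n1: "cmod ?r < 1" "cmod (- ?r) < 1" using r by auto
    have "(cmod (CC + DD*?r))\<^sup>2 \<le> (cmod (AA + BB*?r))\<^sup>2"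
      using b1[OF n1(1)] by (simp add: power_mono)
    moreover have "(cmod (CC - DD*?r))\<^sup>2 \<le> (cmod (AA - BB*?r))\<^sup>2"
      using b1[OF n1(2)] by (simp add: power_mono)
    moreover have "(cmod (BB + DD*?r))\<^sup>2 \<le> (cmod (AA + CC*?r))\<^sup>2"
      using b2[OF n1(1)] by (simp add: power_mono)
    moreover have "(cmod (BB - DD*?r))\<^sup>2 \<le> (cmod (AA - CC*?r))\<^sup>2"
      using b2[OF n1(2)] by (simp add: power_mono)
    ultimately have "(cmod (CC + DD*?r))\<^sup>2 + (cmod (CC - DD*?r))\<^sup>2 + (cmod (BB + DD*?r))\<^sup>2 + (cmod (BB - DD*?r))\<^sup>2
        \<le> (cmod (AA + BB*?r))\<^sup>2 + (cmod (AA - BB*?r))\<^sup>2 + (cmod (AA + CC*?r))\<^sup>2 + (cmod (AA - CC*?r))\<^sup>2"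
      by linarith
    moreover have "(cmod (CC + DD*?r))\<^sup>2 + (cmod (CC - DD*?r))\<^sup>2 = 2 * (cmod CC)\<^sup>2 + 2 * (cmod DD * r)\<^sup>2"
      using para_law[of CC "DD*?r"] r by (simp add: norm_mult)
    moreover have "(cmod (BB + DD*?r))\<^sup>2 + (cmod (BB - DD*?r))\<^sup>2 = 2 * (cmod BB)\<^sup>2 + 2 * (cmod DD * r)\<^sup>2"
      using para_law[of BB "DD*?r"] r by (simp add: norm_mult)
    moreover have "(cmod (AA + BB*?r))\<^sup>2 + (cmod (AA - BB*?r))\<^sup>2 = 2 * (cmod AA)\<^sup>2 + 2 * (cmod BB * r)\<^sup>2"
      using para_law[of AA "BB*?r"] r by (simp add: norm_mult)
    moreover have "(cmod (AA + CC*?r))\<^sup>2 + (cmod (AA - CC*?r))\<^sup>2 = 2 * (cmod AA)\<^sup>2 + 2 * (cmod CC * r)\<^sup>2"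
      using para_law[of AA "CC*?r"] r by (simp add: norm_mult)
    ultimately have "2 * (cmod CC)\<^sup>2 + 2 * (cmod DD * r)\<^sup>2 + 2 * (cmod BB)\<^sup>2 + 2 * (cmod DD * r)\<^sup>2
        \<le> 2 * (cmod AA)\<^sup>2 + 2 * (cmod BB * r)\<^sup>2 + 2 * (cmod AA)\<^sup>2 + 2 * (cmod CC * r)\<^sup>2"
      by linarith
    moreover have "(cmod BB * r)\<^sup>2 \<le> (cmod BB)\<^sup>2" "(cmod CC * r)\<^sup>2 \<le> (cmod CC)\<^sup>2"
      using r by (auto simp: power_mult_distrib intro!: mult_left_le power_le_one)
    ultimately have "(cmod DD * r)\<^sup>2 \<le> (cmod AA)\<^sup>2" by linarith
    thus ?thesis using r by (simp add: power2_le_iff_abs_le)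
  qed
  have DA: "cmod DD \<le> cmod AA"
  proof (rule ccontr)
    assume "\<not> ?thesis"
    hence lt: "cmod AA < cmod DD" by simp
    hence Dp: "cmod DD > 0" by (meson norm_ge_zero le_less_trans)
    define r where "r = (cmod AA / cmod DD + 1) / 2"
    have "cmod AA / cmod DD < 1" using lt Dp by (simp add: divide_less_eq)
    hence "0 \<le> r" "r < 1" using Dp by (auto simp: r_def)
    hence "cmod DD * r \<le> cmod AA" by (rule key)
    moreover have "cmod DD * r > cmod AA"
    proof -
      have "cmod DD * r = (cmod AA + cmod DD) / 2" using Dp by (simp add: r_def field_simps)
      thus ?thesis using lt by simp
    qed
    ultimately show False by simp
  qed
  show ?thesis
  proof
    assume "AA + DD* u = 0"
    hence "AA = - DD* u" by (simp add: eq_neg_iff_add_eq_0)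
    hence "cmod AA = cmod DD * cmod u" by (simp add: norm_mult)
    also have "\<dots> \<le> cmod AA * cmod u" using DA by (simp add: mult_right_mono)
    also have "\<dots> < cmod AA" using u A0 by simp
    finally show False by simp
  qed
qed


definition Zm :: "'a set \<Rightarrow> 'a set set \<Rightarrow> complex \<Rightarrow> ('a \<Rightarrow> complex) \<Rightarrow> complex" where
  "Zm V E b z = (\<Sum>S\<in>Pow V. b ^ card (cut_edges V E S) * (\<Prod>v\<in>S. z v))"

definition dE :: "'a set \<Rightarrow> complex \<Rightarrow> 'a set \<Rightarrow> complex" where
  "dE e b W = (if W \<noteq> {} \<and> W \<noteq> e then b else 1)"

definition Qe :: "'a set \<Rightarrow> complex \<Rightarrow> ('a \<Rightarrow> complex) \<Rightarrow> complex" where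
  "Qe e b w = (\<Sum>W\<in>Pow e. dE e b W * (\<Prod>v\<in>W. w v))"

definition edge_good :: "'a set \<Rightarrow> complex \<Rightarrow> bool" where
  "edge_good e b \<longleftrightarrow> (\<forall>w. (\<forall>v\<in>e. cmod (w v) < 1) \<longrightarrow> Qe e b w \<noteq> 0)"

lemma sum_Pow_split:
  assumes "finite X" "v \<in> X"
  shows "(\<Sum>S\<in>Pow X. f S) = (\<Sum>S\<in>Pow (X - {v}). f S) + (\<Sum>S\<in>Pow (X - {v}). f (insert v S))"
proof -
  have X: "X = insert v (X - {v})" using assms by auto
  have "(\<Sum>S\<in>Pow X. f S) = (\<Sum>S\<in>Pow (X - {v}) \<union> insert v ` Pow (X - {v}). f S)"
    by (subst X, subst Pow_insert) simp
  also have "\<dots> = (\<Sum>S\<in>Pow (X - {v}). f S) + (\<Sum>S\<in>insert v ` Pow (X - {v}). f S)"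
    by (rule sum.union_disjoint) (use assms in auto)
  also have "(\<Sum>S\<in>insert v ` Pow (X - {v}). f S) = (\<Sum>S\<in>Pow (X - {v}). f (insert v S))"
    by (rule sum.reindex_cong[where l="insert v"]) (auto simp: inj_on_def)
  finally show ?thesis .
qed

lemma prod_upd_notin: "v \<notin> R \<Longrightarrow> (\<Prod>x\<in>R. (z(v:=s)) x) = (\<Prod>x\<in>R. z x)"
  by (rule prod.cong) auto

lemma prod_upd_insert:
  assumes "finite R" "v \<notin> R"
  shows "(\<Prod>x\<in>insert v R. (z(v:=s)) x) = s * (\<Prod>x\<in>R. z x)"
  using assms prod_upd_notin[of v R z s] by simp

lemma cut_insert:
  assumes "finite E" "e \<notin> E" "e \<subseteq> V"
  shows "b ^ card (cut_edges V (insert e E) S) = b ^ card (cut_edges V E S) * dE e b (e \<inter> S)"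
proof -
  have fin: "finite (cut_edges V E S)" using assms(1) by (simp add: cut_edges_def)
  have nin: "e \<notin> cut_edges V E S" using assms(2) by (simp add: cut_edges_def)
  have iff: "(e \<inter> S \<noteq> {} \<and> e \<inter> (V - S) \<noteq> {}) = (e \<inter> S \<noteq> {} \<and> e \<inter> S \<noteq> e)"
    using assms(3) by blast
  show ?thesis
  proof (cases "e \<inter> S \<noteq> {} \<and> e \<inter> S \<noteq> e")
    case True
    hence "cut_edges V (insert e E) S = insert e (cut_edges V E S)"
      using iff by (auto simp: cut_edges_def)
    thus ?thesis using True fin nin by (simp add: dE_def)
  next
    case False
    hence "cut_edges V (insert e E) S = cut_edges V E S"
      using iff by (auto simp: cut_edges_def)
    thus ?thesis using False by (auto simp: dE_def)
  qed
qed

context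
  fixes V :: "'a set" and E :: "'a set set" and b :: complex and e :: "'a set"
begin

definition GT :: "'a set \<Rightarrow> ('a \<Rightarrow> complex) \<Rightarrow> ('a \<Rightarrow> complex) \<Rightarrow> complex" where
  "GT T z w = (\<Sum>R\<in>Pow V. \<Sum>W\<in>Pow (e - T).
     b ^ card (cut_edges V E R) * dE e b ((R \<inter> T) \<union> W) * (\<Prod>x\<in>R. z x) * (\<Prod>x\<in>W. w x))"

definition PT :: "'a set \<Rightarrow> bool" where
  "PT T \<longleftrightarrow> (\<forall>z w. (\<forall>x\<in>V. cmod (z x) < 1) \<longrightarrow> (\<forall>x\<in>e. cmod (w x) < 1) \<longrightarrow> GT T z w \<noteq> 0)"

lemma PT_step:
  assumes fV: "finite V" and eV: "e \<subseteq> V" and v: "v \<in> e" "v \<notin> T" and Te: "T \<subseteq> e"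
    and P: "PT T"
  shows "PT (insert v T)"
  unfolding PT_def
proof (intro allI impI)
  fix z w :: "'a \<Rightarrow> complex"
  assume zb: "\<forall>x\<in>V. cmod (z x) < 1" and wb: "\<forall>x\<in>e. cmod (w x) < 1"
  have fe: "finite e" using fV eV finite_subset by blast
  have vV: "v \<in> V" using v eV by auto
  define c where "c R = b ^ card (cut_edges V E R)" for R
  define V' where "V' = V - {v}"
  define e' where "e' = e - T - {v}"
  have e'1: "e - insert v T = e'" by (auto simp: e'_def)
  have e'2: "(e - T) - {v} = e'" by (auto simp: e'_def)
  have fV': "finite V'" and fe': "finite e'" using fV fe by (auto simp: V'_def e'_def)
  have vV': "v \<notin> V'" and ve': "v \<notin> e'" by (auto simp: V'_def e'_def)
  define AA where "AA = (\<Sum>R\<in>Pow V'. \<Sum>W\<in>Pow e'. c R * dE e b ((R \<inter> T) \<union> W) * (\<Prod>x\<in>R. z x) * (\<Prod>x\<in>W. w x))"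
  define BB where "BB = (\<Sum>R\<in>Pow V'. \<Sum>W\<in>Pow e'. c (insert v R) * dE e b ((R \<inter> T) \<union> W) * (\<Prod>x\<in>R. z x) * (\<Prod>x\<in>W. w x))"
  define CC where "CC = (\<Sum>R\<in>Pow V'. \<Sum>W\<in>Pow e'. c R * dE e b (insert v ((R \<inter> T) \<union> W)) * (\<Prod>x\<in>R. z x) * (\<Prod>x\<in>W. w x))"
  define DD where "DD = (\<Sum>R\<in>Pow V'. \<Sum>W\<in>Pow e'. c (insert v R) * dE e b (insert v ((R \<inter> T) \<union> W)) * (\<Prod>x\<in>R. z x) * (\<Prod>x\<in>W. w x))"
  have decomp: "GT T (z(v:=s)) (w(v:=t)) = AA + BB* s + CC* t + DD* s* t" for s t
  proof -
    define f where "f R W = c R * dE e b ((R \<inter> T) \<union> W) * (\<Prod>x\<in>R. (z(v:=s)) x) * (\<Prod>x\<in>W. (w(v:=t)) x)" for R W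
    have "GT T (z(v:=s)) (w(v:=t)) = (\<Sum>R\<in>Pow V. \<Sum>W\<in>Pow (e - T). f R W)"
      by (simp add: GT_def f_def c_def)
    also have "\<dots> = (\<Sum>R\<in>Pow V'. \<Sum>W\<in>Pow (e - T). f R W) + (\<Sum>R\<in>Pow V'. \<Sum>W\<in>Pow (e - T). f (insert v R) W)"
      unfolding V'_def by (rule sum_Pow_split[OF fV vV])
    also have "(\<Sum>R\<in>Pow V'. \<Sum>W\<in>Pow (e - T). f R W) = (\<Sum>R\<in>Pow V'. (\<Sum>W\<in>Pow e'. f R W) + (\<Sum>W\<in>Pow e'. f R (insert v W)))"
      by (rule sum.cong[OF refl], subst sum_Pow_split[of "e - T" v], use fe v in auto, simp add: e'2)
    also have "(\<Sum>R\<in>Pow V'. \<Sum>W\<in>Pow (e - T). f (insert v R) W) = (\<Sum>R\<in>Pow V'. (\<Sum>W\<in>Pow e'. f (insert v R) W) + (\<Sum>W\<in>Pow e'. f (insert v R) (insert v W)))"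
      by (rule sum.cong[OF refl], subst sum_Pow_split[of "e - T" v], use fe v in auto, simp add: e'2)
    finally have G: "GT T (z(v:=s)) (w(v:=t)) = (\<Sum>R\<in>Pow V'. (\<Sum>W\<in>Pow e'. f R W) + (\<Sum>W\<in>Pow e'. f R (insert v W)))
        + (\<Sum>R\<in>Pow V'. (\<Sum>W\<in>Pow e'. f (insert v R) W) + (\<Sum>W\<in>Pow e'. f (insert v R) (insert v W)))" .
    have finR: "finite R" "v \<notin> R" if "R \<subseteq> V'" for R
      using that fV' vV' finite_subset by auto
    have finW: "finite W" "v \<notin> W" if "W \<subseteq> e'" for W
      using that fe' ve' finite_subset by auto
    note fin = finR finW
    have s1: "(\<Sum>R\<in>Pow V'. \<Sum>W\<in>Pow e'. f R W) = AA"
      unfolding AA_def f_def by (intro sum.cong refl) (simp add: fin prod_upd_notin del: fun_upd_apply)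
    have s2: "(\<Sum>R\<in>Pow V'. \<Sum>W\<in>Pow e'. f R (insert v W)) = CC * t"
      unfolding CC_def f_def sum_distrib_right
      by (intro sum.cong refl) (simp add: fin prod_upd_notin prod_upd_insert fun_upd_same del: fun_upd_apply)
    have s3: "(\<Sum>R\<in>Pow V'. \<Sum>W\<in>Pow e'. f (insert v R) W) = BB * s"
      unfolding BB_def f_def sum_distrib_right
      by (intro sum.cong refl) (simp add: fin prod_upd_notin prod_upd_insert v(2) fun_upd_same del: fun_upd_apply)
    have s4: "(\<Sum>R\<in>Pow V'. \<Sum>W\<in>Pow e'. f (insert v R) (insert v W)) = DD * s * t"
      unfolding DD_def f_def sum_distrib_right
      by (intro sum.cong refl) (simp add: fin prod_upd_notin prod_upd_insert v(2) fun_upd_same del: fun_upd_apply)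
    show ?thesis unfolding G sum.distrib s1 s2 s3 s4 by (simp add: algebra_simps)
  qed
  have G2: "GT (insert v T) z w = AA + DD * z v"
  proof -
    define f where "f R W = c R * dE e b ((R \<inter> insert v T) \<union> W) * (\<Prod>x\<in>R. z x) * (\<Prod>x\<in>W. w x)" for R W
    have "GT (insert v T) z w = (\<Sum>R\<in>Pow V. \<Sum>W\<in>Pow e'. f R W)"
      by (simp add: GT_def f_def c_def e'1)
    also have "\<dots> = (\<Sum>R\<in>Pow V'. \<Sum>W\<in>Pow e'. f R W) + (\<Sum>R\<in>Pow V'. \<Sum>W\<in>Pow e'. f (insert v R) W)"
      unfolding V'_def by (rule sum_Pow_split[OF fV vV])
    also have "(\<Sum>R\<in>Pow V'. \<Sum>W\<in>Pow e'. f R W) = AA"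
      unfolding AA_def f_def using vV' by (intro sum.cong refl) (auto intro!: arg_cong[where f="\<lambda>X. dE e b X"])
    also have "(\<Sum>R\<in>Pow V'. \<Sum>W\<in>Pow e'. f (insert v R) W) = DD * z v"
    proof -
      have finR: "finite R" "v \<notin> R" if "R \<subseteq> V'" for R
        using that fV' vV' finite_subset by auto
      show ?thesis unfolding DD_def f_def sum_distrib_right
        by (intro sum.cong refl) (simp add: finR v(2) algebra_simps)
    qed
    finally show ?thesis .
  qed
  have "AA + DD * z v \<noteq> 0"
  proof (rule asano_point)
    show "cmod (z v) < 1" using zb vV by auto
    show "\<forall>s t. cmod s < 1 \<longrightarrow> cmod t < 1 \<longrightarrow> AA + BB * s + CC * t + DD * s * t \<noteq> 0"
    proof (intro allI impI)
      fix s t :: complex assume "cmod s < 1" "cmod t < 1"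
      hence "GT T (z(v:=s)) (w(v:=t)) \<noteq> 0" using P zb wb unfolding PT_def by auto
      thus "AA + BB * s + CC * t + DD * s * t \<noteq> 0" using decomp by simp
    qed
  qed
  thus "GT (insert v T) z w \<noteq> 0" using G2 by simp
qed

lemma PT_empty:
  assumes gE: "\<forall>z. (\<forall>x\<in>V. cmod (z x) < 1) \<longrightarrow> Zm V E b z \<noteq> 0" and ge: "edge_good e b"
  shows "PT {}"
  unfolding PT_def
proof (intro allI impI)
  fix z w :: "'a \<Rightarrow> complex"
  assume zb: "\<forall>x\<in>V. cmod (z x) < 1" and wb: "\<forall>x\<in>e. cmod (w x) < 1"
  have "GT {} z w = Zm V E b z * Qe e b w"
    unfolding GT_def Zm_def Qe_def sum_product by (simp add: algebra_simps)
  thus "GT {} z w \<noteq> 0" using gE ge zb wb unfolding edge_good_def by auto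
qed

lemma GT_full:
  assumes "finite E" "e \<notin> E" "e \<subseteq> V"
  shows "GT e z w = Zm V (insert e E) b z"
  unfolding GT_def Zm_def using cut_insert[OF assms, of b] by (simp add: Int_commute)

lemma PT_all:
  assumes fV: "finite V" and eV: "e \<subseteq> V" and P0: "PT {}"
  shows "PT e"
proof -
  have fe: "finite e" using fV eV finite_subset by blast
  have "finite F \<Longrightarrow> F \<subseteq> e \<Longrightarrow> PT F" for F
  proof (induction F rule: finite_induct)
    case empty show ?case by (rule P0)
  next
    case (insert a F)
    thus ?case using PT_step[OF fV eV, of a F] by auto
  qed
  thus ?thesis using fe by simp
qed

end

definition good :: "'a set \<Rightarrow> 'a set set \<Rightarrow> complex \<Rightarrow> bool" where
  "good V E b \<longleftrightarrow> (\<forall>z. (\<forall>x\<in>V. cmod (z x) < 1) \<longrightarrow> Zm V E b z \<noteq> 0)"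

lemma good_empty:
  assumes "finite V" shows "good V {} b"
  unfolding good_def
proof (intro allI impI)
  fix z :: "'a \<Rightarrow> complex" assume zb: "\<forall>x\<in>V. cmod (z x) < 1"
  have "Zm V {} b z = (\<Prod>x\<in>V. z x + 1)"
    unfolding Zm_def prod_add[OF assms] by (simp add: cut_edges_def)
  moreover have "z x + 1 \<noteq> 0" if "x \<in> V" for x
  proof
    assume h: "z x + 1 = 0"
    have "z x = (z x + 1) - 1" by simp
    also have "\<dots> = -1" using h by simp
    finally have "z x = -1" .
    thus False using zb that by auto
  qed
  ultimately show "Zm V {} b z \<noteq> 0" using assms by simp
qed

theorem asano_main:
  assumes fV: "finite V" and eV: "\<forall>e\<in>E. e \<subseteq> V" and eg: "\<forall>e\<in>E. edge_good e b"
  shows "good V E b"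
proof -
  have fE: "finite E" using eV fV by (meson Pow_iff finite_Pow_iff finite_subset subsetI)
  show ?thesis using fE eV eg
  proof (induction E rule: finite_induct)
    case empty show ?case by (rule good_empty[OF fV])
  next
    case (insert e E)
    have e: "e \<subseteq> V" "edge_good e b" using insert.prems by auto
    have gE: "good V E b" using insert by auto
    have "PT V E b e e"
      by (rule PT_all[OF fV e(1)], rule PT_empty, use gE e in \<open>auto simp: good_def\<close>)
    thus ?case unfolding good_def PT_def
      using GT_full[OF insert(1,2) e(1)] by (metis (no_types, lifting) e(1) subsetD)
  qed
qed


lemma ising_Zm: "ising_Z V E b z = Zm V E (of_real b) (\<lambda>_. z)"
  unfolding ising_Z_def Zm_def by simp

lemma cut_compl:
  assumes "\<forall>e\<in>E. e \<subseteq> V"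
  shows "cut_edges V E (V - S) = cut_edges V E S"
  unfolding cut_edges_def using assms by auto

lemma ising_recip:
  assumes hg: "hypergraph V E" and z: "z \<noteq> 0"
  shows "ising_Z V E b z = z ^ card V * ising_Z V E b (1/z)"
proof -
  have fV: "finite V" and eV: "\<forall>e\<in>E. e \<subseteq> V" using hg by (auto simp: hypergraph_def)
  have "ising_Z V E b (1/z) = (\<Sum>S\<in>Pow V. (complex_of_real b) ^ card (cut_edges V E (V - S)) * (1/z) ^ card (V - S))"
    unfolding ising_Z_def
    by (rule sum.reindex_bij_witness[where i="\<lambda>S. V - S" and j="\<lambda>S. V - S"]) (auto simp: Diff_Diff_Int Int_absorb1)
  also have "\<dots> = (\<Sum>S\<in>Pow V. (complex_of_real b) ^ card (cut_edges V E S) * (1/z) ^ (card V - card S))"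
  proof (rule sum.cong[OF refl])
    fix S assume "S \<in> Pow V"
    hence "card (V - S) = card V - card S" using fV by (simp add: card_Diff_subset finite_subset)
    thus "(complex_of_real b) ^ card (cut_edges V E (V - S)) * (1/z) ^ card (V - S) =
          (complex_of_real b) ^ card (cut_edges V E S) * (1/z) ^ (card V - card S)"
      by (simp add: cut_compl[OF eV])
  qed
  finally have "z ^ card V * ising_Z V E b (1/z) =
      (\<Sum>S\<in>Pow V. (complex_of_real b) ^ card (cut_edges V E S) * (z ^ card V * (1/z) ^ (card V - card S)))"
    by (simp add: sum_distrib_left algebra_simps)
  also have "\<dots> = ising_Z V E b z"
    unfolding ising_Z_def
  proof (rule sum.cong[OF refl])
    fix S assume "S \<in> Pow V"
    hence le: "card S \<le> card V" using fV by (simp add: card_mono)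
    have "z ^ card V = z ^ card S * z ^ (card V - card S)"
      using le by (simp add: power_add[symmetric])
    hence "z ^ card V * (1/z) ^ (card V - card S) = z ^ card S"
      using z by (simp add: power_one_over field_simps)
    thus "(complex_of_real b) ^ card (cut_edges V E S) * (z ^ card V * (1/z) ^ (card V - card S)) =
          (complex_of_real b) ^ card (cut_edges V E S) * z ^ card S" by simp
  qed
  finally show ?thesis by simp
qed

theorem good_unit_circle:
  assumes hg: "hypergraph V E" and g: "good V E (of_real b)" and Z: "ising_Z V E b z = 0"
  shows "cmod z = 1"
proof -
  have in_disk: "ising_Z V E b u \<noteq> 0" if "cmod u < 1" for u
    using g that unfolding good_def ising_Zm by auto
  show ?thesis
  proof (rule ccontr)
    assume ne: "cmod z \<noteq> 1"
    show False
    proof (cases "cmod z < 1")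
      case True thus False using in_disk Z by auto
    next
      case False
      hence gt: "cmod z > 1" using ne by simp
      hence z0: "z \<noteq> 0" by auto
      have "cmod (1/z) < 1" using gt by (simp add: norm_divide divide_less_eq)
      hence "ising_Z V E b (1/z) \<noteq> 0" by (rule in_disk)
      moreover have "ising_Z V E b z = z ^ card V * ising_Z V E b (1/z)" by (rule ising_recip[OF hg z0])
      ultimately show False using Z z0 by simp
    qed
  qed
qed


lemma Qe_formula:
  assumes fe: "finite e" and ne: "e \<noteq> {}"
  shows "Qe e b w = (1 - b) * (1 + (\<Prod>x\<in>e. w x)) + b * (\<Prod>x\<in>e. 1 + w x)"
proof -
  have P: "(\<Prod>x\<in>e. 1 + w x) = (\<Sum>W\<in>Pow e. \<Prod>x\<in>W. w x)"
    using prod_add[OF fe, of w "\<lambda>_. 1"] by (simp add: add.commute)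
  have d: "dE e b W = b + (1 - b) * (if W = {} then 1 else 0) + (1 - b) * (if W = e then 1 else 0)" for W
    using ne by (auto simp: dE_def algebra_simps)
  have "Qe e b w = (\<Sum>W\<in>Pow e. b * (\<Prod>x\<in>W. w x) + (1 - b) * (if W = {} then (\<Prod>x\<in>W. w x) else 0)
        + (1 - b) * (if W = e then (\<Prod>x\<in>W. w x) else 0))"
    unfolding Qe_def d by (intro sum.cong refl) (simp add: algebra_simps)
  also have "\<dots> = b * (\<Sum>W\<in>Pow e. \<Prod>x\<in>W. w x) + (1 - b) * (\<Sum>W\<in>Pow e. if W = {} then (\<Prod>x\<in>W. w x) else 0)
        + (1 - b) * (\<Sum>W\<in>Pow e. if W = e then (\<Prod>x\<in>W. w x) else 0)"
    by (simp add: sum.distrib sum_distrib_left)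
  also have "(\<Sum>W\<in>Pow e. if W = {} then (\<Prod>x\<in>W. w x) else 0) = 1"
    using fe by (simp add: sum.delta)
  also have "(\<Sum>W\<in>Pow e. if W = e then (\<Prod>x\<in>W. w x) else 0) = (\<Prod>x\<in>e. w x)"
    using fe by (simp add: sum.delta)
  finally show ?thesis unfolding P by (simp add: algebra_simps)
qed

definition alpha :: "complex \<Rightarrow> 'a set \<Rightarrow> ('a \<Rightarrow> complex) \<Rightarrow> complex" where
  "alpha b F v = (1 - b) + b * (\<Prod>i\<in>F. 1 + v i)"
definition beta :: "complex \<Rightarrow> 'a set \<Rightarrow> ('a \<Rightarrow> complex) \<Rightarrow> complex" where
  "beta b F v = (1 - b) * (\<Prod>i\<in>F. v i) + b * (\<Prod>i\<in>F. 1 + v i)"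

lemma torus_eq:
  assumes fF: "finite F" and tor: "\<forall>i\<in>F. cmod (v i) = 1"
  shows "cmod (beta (of_real b) F v) = cmod (alpha (of_real b) F v)"
proof -
  have cv: "v i * cnj (v i) = 1" if "i \<in> F" for i
    using tor that complex_norm_square[of "v i"] by simp
  have ca: "cnj (alpha (of_real b) F v) = (1 - of_real b) + of_real b * (\<Prod>i\<in>F. 1 + cnj (v i))"
    by (simp add: alpha_def)
  have pp: "(\<Prod>i\<in>F. v i) * (\<Prod>i\<in>F. 1 + cnj (v i)) = (\<Prod>i\<in>F. 1 + v i)"
    unfolding prod.distrib[symmetric]
    by (rule prod.cong) (auto simp: distrib_left cv add.commute)
  have "(\<Prod>i\<in>F. v i) * cnj (alpha (of_real b) F v) =
      (1 - of_real b) * (\<Prod>i\<in>F. v i) + of_real b * ((\<Prod>i\<in>F. v i) * (\<Prod>i\<in>F. 1 + cnj (v i)))"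
    unfolding ca by (simp add: algebra_simps)
  hence "beta (of_real b) F v = (\<Prod>i\<in>F. v i) * cnj (alpha (of_real b) F v)"
    unfolding pp by (simp add: beta_def)
  moreover have "cmod (\<Prod>i\<in>F. v i) = (\<Prod>i\<in>F. cmod (v i))" by (simp add: prod_norm)
  moreover have "(\<Prod>i\<in>F. cmod (v i)) = 1" using tor by simp
  ultimately show ?thesis by (simp add: norm_mult)
qed

lemma mm1:
  fixes a1 a2 c1 c2 :: complex
  assumes nz: "\<forall>x. cmod x \<le> 1 \<longrightarrow> c1 + c2* x \<noteq> 0"
    and bd: "\<forall>x. cmod x = 1 \<longrightarrow> cmod (a1 + a2* x) \<le> cmod (c1 + c2* x)"
    and x: "cmod x \<le> 1"
  shows "cmod (a1 + a2* x) \<le> cmod (c1 + c2* x)"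
proof -
  define f where "f y = (a1 + a2* y) / (c1 + c2* y)" for y
  have "cmod (f x) \<le> 1"
  proof (rule maximum_modulus_frontier[where S="cball 0 1" and f=f and \<xi>=x])
    show "f holomorphic_on interior (cball 0 1)"
      unfolding f_def using nz by (intro holomorphic_intros) (auto simp: dist_norm)
    show "continuous_on (closure (cball 0 1)) f"
      unfolding f_def using nz by (intro continuous_intros) (auto simp: dist_norm)
    show "bounded (cball 0 1)" by simp
    show "cmod (f z) \<le> 1" if "z \<in> frontier (cball 0 1)" for z
    proof -
      have z: "cmod z = 1" using that by (simp add: frontier_cball dist_norm)
      hence "c1 + c2* z \<noteq> 0" using nz by auto
      thus ?thesis using bd z by (simp add: f_def norm_divide divide_le_eq_1)
    qed
    show "x \<in> cball 0 1" using x by (simp add: dist_norm)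
  qed
  moreover have "c1 + c2* x \<noteq> 0" using nz x by auto
  ultimately show ?thesis by (simp add: f_def norm_divide divide_le_eq_1 split: if_splits)
qed

lemma prod_upd_in:
  assumes "finite F" "j \<in> F"
  shows "(\<Prod>i\<in>F. g ((v(j:=x)) i)) = g x * (\<Prod>i\<in>F - {j}. g (v i))"
proof -
  have "(\<Prod>i\<in>F. g ((v(j:=x)) i)) = g ((v(j:=x)) j) * (\<Prod>i\<in>F - {j}. g ((v(j:=x)) i))"
    using assms by (simp add: prod.remove)
  also have "(\<Prod>i\<in>F - {j}. g ((v(j:=x)) i)) = (\<Prod>i\<in>F - {j}. g (v i))"
    by (rule prod.cong) auto
  finally show ?thesis by simp
qed

lemma maxmod:
  assumes fF: "finite F"
    and nz: "\<forall>v. (\<forall>i\<in>F. cmod (v i) \<le> 1) \<longrightarrow> alpha (of_real b) F v \<noteq> 0"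
  shows "\<forall>v. (\<forall>i\<in>F. cmod (v i) \<le> 1) \<longrightarrow> cmod (beta (of_real b) F v) \<le> cmod (alpha (of_real b) F v)"
proof -
  let ?b = "complex_of_real b"
  have "finite J \<Longrightarrow> J \<subseteq> F \<Longrightarrow> \<forall>v. (\<forall>i\<in>F. cmod (v i) \<le> 1) \<longrightarrow> (\<forall>i\<in>F - J. cmod (v i) = 1) \<longrightarrow>
          cmod (beta ?b F v) \<le> cmod (alpha ?b F v)" for J
  proof (induction J rule: finite_induct)
    case empty
    show ?case using torus_eq[OF fF] by auto
  next
    case (insert j J)
    show ?case
    proof (intro allI impI)
      fix v :: "'a \<Rightarrow> complex"
      assume vb: "\<forall>i\<in>F. cmod (v i) \<le> 1" and vt: "\<forall>i\<in>F - insert j J. cmod (v i) = 1"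
      have jF: "j \<in> F" using insert by auto
      define R where "R = (\<Prod>i\<in>F - {j}. 1 + v i)"
      define P where "P = (\<Prod>i\<in>F - {j}. v i)"
      have al: "alpha ?b F (v(j:=x)) = ((1 - ?b) + ?b * R) + (?b * R) * x" for x
        unfolding alpha_def R_def using prod_upd_in[OF fF jF, of "\<lambda>y. 1 + y" v x]
        by (simp add: algebra_simps)
      have be: "beta ?b F (v(j:=x)) = (?b * R) + ((1 - ?b) * P + ?b * R) * x" for x
        unfolding beta_def R_def P_def using prod_upd_in[OF fF jF, of "\<lambda>y. 1 + y" v x]
          prod_upd_in[OF fF jF, of "\<lambda>y. y" v x]
        by (simp add: algebra_simps)
      have vb': "\<forall>i\<in>F. cmod ((v(j:=x)) i) \<le> 1" if "cmod x \<le> 1" for x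
        using vb that by auto
      have "cmod ((?b * R) + ((1 - ?b) * P + ?b * R) * v j) \<le> cmod (((1 - ?b) + ?b * R) + (?b * R) * v j)"
      proof (rule mm1)
        show "\<forall>x. cmod x \<le> 1 \<longrightarrow> (1 - ?b) + ?b * R + ?b * R * x \<noteq> 0"
          using nz vb' al by metis
        show "\<forall>x. cmod x = 1 \<longrightarrow> cmod (?b * R + ((1 - ?b) * P + ?b * R) * x) \<le> cmod ((1 - ?b) + ?b * R + ?b * R * x)"
        proof (intro allI impI)
          fix x :: complex assume x1: "cmod x = 1"
          have "\<forall>i\<in>F - J. cmod ((v(j:=x)) i) = 1" using vt x1 by auto
          hence "cmod (beta ?b F (v(j:=x))) \<le> cmod (alpha ?b F (v(j:=x)))"
            using insert.IH insert.prems vb' x1 by auto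
          thus "cmod (?b * R + ((1 - ?b) * P + ?b * R) * x) \<le> cmod ((1 - ?b) + ?b * R + ?b * R * x)"
            using al be by metis
        qed
        show "cmod (v j) \<le> 1" using vb jF by auto
      qed
      thus "cmod (beta ?b F v) \<le> cmod (alpha ?b F v)"
        using al[of "v j"] be[of "v j"] by simp
    qed
  qed
  from this[of F] fF show ?thesis by simp
qed


lemma tangent_ln_cos:
  fixes a x :: real
  assumes a: "0 < a" "a < pi/2" and x: "0 \<le> x" "x < pi/2"
  shows "ln (cos x) \<le> ln (cos a) - tan a * (x - a)"
proof -
  define h where "h y = ln (cos y) + tan a * y" for y
  define h' where "h' y = tan a - tan y" for y
  have der: "DERIV h y :> h' y" if "0 \<le> y" "y < pi/2" for y
  proof -
    have cy: "cos y > 0" using that by (intro cos_gt_zero_pi) auto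
    have "DERIV (\<lambda>y. ln (cos y)) y :> inverse (cos y) * - sin y"
      by (rule DERIV_chain2[OF DERIV_ln DERIV_cos]) (use cy in auto)
    hence "DERIV h y :> inverse (cos y) * - sin y + tan a * 1"
      unfolding h_def by (intro derivative_intros) auto
    moreover have "inverse (cos y) * - sin y + tan a * 1 = h' y"
      by (simp add: h'_def tan_def divide_inverse algebra_simps)
    ultimately show ?thesis by simp
  qed
  have "h x \<le> h a"
  proof (cases x a rule: linorder_cases)
    case less
    obtain z where z: "x < z" "z < a" "h a - h x = (a - x) * h' z"
      using MVT2[OF less, of h h'] der x a by force
    have "tan z < tan a" using z x a by (intro tan_monotone) auto
    hence "h' z > 0" by (simp add: h'_def)
    have "(a - x) * h' z > 0" using \<open>h' z > 0\<close> less by simp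
    thus ?thesis using z by linarith
  next
    case equal thus ?thesis by simp
  next
    case greater
    obtain z where z: "a < z" "z < x" "h x - h a = (x - a) * h' z"
      using MVT2[OF greater, of h h'] der x a by force
    have "tan a < tan z" using z x a by (intro tan_monotone) auto
    hence "h' z < 0" by (simp add: h'_def)
    have "(x - a) * h' z < 0" using \<open>h' z < 0\<close> greater by (simp add: mult_pos_neg)
    thus ?thesis using z by linarith
  qed
  thus ?thesis by (simp add: h_def algebra_simps)
qed

lemma tangent_cos:
  fixes a x :: real
  assumes a: "0 < a" "a < pi/2" and x: "0 \<le> x" "x < pi/2"
  shows "cos x \<le> cos a * exp (- (tan a * (x - a)))"
proof -
  have cx: "cos x > 0" and ca: "cos a > 0" using a x by (auto intro!: cos_gt_zero_pi)
  have "cos x = exp (ln (cos x))" using cx by simp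
  also have "\<dots> \<le> exp (ln (cos a) - tan a * (x - a))"
    using tangent_ln_cos[OF a x] by simp
  also have "\<dots> = cos a * exp (- (tan a * (x - a)))"
    using ca by (simp add: exp_diff exp_minus divide_inverse)
  finally show ?thesis .
qed

lemma jensen_cos:
  fixes x :: "'i \<Rightarrow> real" and k :: nat
  assumes fin: "finite F" and k: "k \<ge> 4" and cF: "card F \<le> k - 1"
    and xb: "\<forall>i\<in>F. 0 \<le> x i \<and> x i < pi/2" and sx: "(\<Sum>i\<in>F. x i) \<ge> pi"
  shows "(\<Prod>i\<in>F. 2 * cos (x i)) \<le> (2 * cos (pi / real (k - 1))) ^ (k - 1)"
proof -
  define a where "a = pi / real (k - 1)"
  have k1: "real (k - 1) \<ge> 3" using k by linarith
  have a0: "0 < a" using k1 by (simp add: a_def)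
  have a3: "a \<le> pi/3" using k1 unfolding a_def by (simp add: field_simps)
  hence a2: "a < pi/2" using a0 pi_gt_zero by linarith
  have ca: "cos a \<ge> 1/2"
    using cos_monotone_0_pi_le[of a "pi/3"] a0 a3 by (simp add: cos_60)
  have ta: "tan a > 0" using a0 a2 by (simp add: tan_gt_zero)
  have "(\<Prod>i\<in>F. cos (x i)) \<le> (\<Prod>i\<in>F. cos a * exp (- (tan a * (x i - a))))"
    using xb a0 a2 by (intro prod_mono conjI tangent_cos) (auto intro!: cos_ge_zero)
  also have "\<dots> = cos a ^ card F * exp (- (tan a * ((\<Sum>i\<in>F. x i) - card F * a)))"
    using fin by (simp add: prod.distrib exp_sum[symmetric] sum_subtractf sum_negf sum_distrib_left
        algebra_simps)
  also have "\<dots> \<le> cos a ^ card F * 1"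
  proof -
    have "card F * a \<le> real (k - 1) * a" using cF a0 by (intro mult_right_mono) auto
    also have "\<dots> = pi" using k1 by (simp add: a_def)
    finally have "(\<Sum>i\<in>F. x i) - card F * a \<ge> 0" using sx by linarith
    hence "- (tan a * ((\<Sum>i\<in>F. x i) - card F * a)) \<le> 0" using ta by simp
    thus ?thesis using ca by (intro mult_left_mono) auto
  qed
  finally have p: "(\<Prod>i\<in>F. cos (x i)) \<le> cos a ^ card F" by simp
  have "(\<Prod>i\<in>F. 2 * cos (x i)) = 2 ^ card F * (\<Prod>i\<in>F. cos (x i))"
    by (simp add: prod.distrib)
  also have "\<dots> \<le> 2 ^ card F * cos a ^ card F" using p by simp
  also have "\<dots> = (2 * cos a) ^ card F" by (simp add: power_mult_distrib)
  also have "\<dots> \<le> (2 * cos a) ^ (k - 1)" using ca cF by (intro power_increasing) auto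
  finally show ?thesis by (simp add: a_def)
qed


lemma arg_lemma:
  fixes \<zeta> :: complex
  assumes nz: "\<zeta> \<noteq> 0" and d: "cmod (\<zeta> - 1) \<le> 1"
  shows "\<bar>Arg \<zeta>\<bar> < pi/2" "cmod \<zeta> \<le> 2 * cos (Arg \<zeta>)"
    "cmod (\<zeta> - 1) < 1 \<Longrightarrow> cmod \<zeta> < 2 * cos (Arg \<zeta>)"
proof -
  have n2: "(cmod \<zeta>)\<^sup>2 = (Re \<zeta>)\<^sup>2 + (Im \<zeta>)\<^sup>2" by (rule cmod_power2)
  have d2: "(cmod (\<zeta> - 1))\<^sup>2 = (Re \<zeta> - 1)\<^sup>2 + (Im \<zeta>)\<^sup>2" by (simp add: cmod_power2)
  have "(cmod (\<zeta> - 1))\<^sup>2 \<le> 1" using d by (simp add: power_le_one)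
  hence le: "(cmod \<zeta>)\<^sup>2 \<le> 2 * Re \<zeta>" using n2 d2 by (simp add: power2_eq_square algebra_simps)
  have pos: "cmod \<zeta> > 0" using nz by simp
  hence "Re \<zeta> > 0" using le by (smt (verit) zero_less_power)
  have ca: "cos (Arg \<zeta>) = Re \<zeta> / cmod \<zeta>" using nz by (rule cos_Arg)
  have "cmod \<zeta> * cmod \<zeta> \<le> 2 * Re \<zeta>" using le by (simp add: power2_eq_square)
  thus "cmod \<zeta> \<le> 2 * cos (Arg \<zeta>)" using pos unfolding ca by (simp add: field_simps)
  show "cmod \<zeta> < 2 * cos (Arg \<zeta>)" if "cmod (\<zeta> - 1) < 1"
  proof -
    have "(cmod (\<zeta> - 1))\<^sup>2 < 1" using that by (simp add: power_less_one_iff abs_square_less_1)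
    hence "cmod \<zeta> * cmod \<zeta> < 2 * Re \<zeta>" using n2 d2 by (simp add: power2_eq_square algebra_simps)
    thus ?thesis using pos unfolding ca by (simp add: field_simps)
  qed
  have cpos: "cos (Arg \<zeta>) > 0" using \<open>Re \<zeta> > 0\<close> pos ca by simp
  show "\<bar>Arg \<zeta>\<bar> < pi/2"
  proof (rule ccontr)
    assume "\<not> \<bar>Arg \<zeta>\<bar> < pi/2"
    hence h: "pi/2 \<le> \<bar>Arg \<zeta>\<bar>" by simp
    have "\<bar>Arg \<zeta>\<bar> \<le> pi" using Arg_bounded[of \<zeta>] by auto
    hence "cos \<bar>Arg \<zeta>\<bar> \<le> cos (pi/2)" using h by (intro cos_monotone_0_pi_le) auto
    thus False using cpos by simp
  qed
qed

lemma prod_rcis: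
  assumes "finite F"
  shows "(\<Prod>i\<in>F. rcis (r i) (a i)) = rcis (\<Prod>i\<in>F. r i) (\<Sum>i\<in>F. a i)"
  using assms by (induction F rule: finite_induct) (auto simp: rcis_mult)

lemma cos_gt_m1: "\<bar>x\<bar> < pi \<Longrightarrow> cos x > -1"
proof -
  assume h: "\<bar>x\<bar> < pi"
  have "cos pi < cos \<bar>x\<bar>" using h by (intro cos_monotone_0_pi) auto
  thus ?thesis by simp
qed

lemma neg_real_prod:
  fixes \<zeta> :: "'i \<Rightarrow> complex" and k :: nat
  assumes fF: "finite F" and z: "\<forall>i\<in>F. \<zeta> i \<noteq> 0 \<and> cmod (\<zeta> i - 1) \<le> 1"
    and pr: "(\<Prod>i\<in>F. \<zeta> i) = of_real t" and t: "t < 0"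
    and k: "k \<ge> 3" and cF: "card F \<le> k - 1"
  shows "k \<ge> 4" "- t \<le> (2 * cos (pi / real (k - 1))) ^ (k - 1)"
    "\<forall>i\<in>F. cmod (\<zeta> i - 1) < 1 \<Longrightarrow> - t < (2 * cos (pi / real (k - 1))) ^ (k - 1)"
proof -
  define \<phi> where "\<phi> i = Arg (\<zeta> i)" for i
  define R where "R = (\<Prod>i\<in>F. cmod (\<zeta> i))"
  define \<Theta> where "\<Theta> = (\<Sum>i\<in>F. \<phi> i)"
  have ab: "\<bar>\<phi> i\<bar> < pi/2" "cmod (\<zeta> i) \<le> 2 * cos (\<phi> i)" if "i \<in> F" for i
    using arg_lemma[of "\<zeta> i"] z that by (auto simp: \<phi>_def)
  have "(\<Prod>i\<in>F. \<zeta> i) = (\<Prod>i\<in>F. rcis (cmod (\<zeta> i)) (\<phi> i))"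
    by (simp add: \<phi>_def rcis_cmod_Arg)
  also have "\<dots> = rcis R \<Theta>" unfolding R_def \<Theta>_def by (rule prod_rcis[OF fF])
  finally have eq: "of_real t = rcis R \<Theta>" using pr by simp
  have Rpos: "R > 0" unfolding R_def using z by (intro prod_pos) auto
  have "\<bar>t\<bar> = R" using arg_cong[OF eq, of cmod] Rpos by (simp add: rcis_def norm_mult)
  hence tR: "t = - R" using t by simp
  have "t = R * cos \<Theta>" using arg_cong[OF eq, of Re] by (simp add: rcis_def)
  hence "R * (cos \<Theta> + 1) = 0" using tR by (simp add: algebra_simps)
  hence "cos \<Theta> = -1" using Rpos by (simp add: add_eq_0_iff)
  hence "\<bar>\<Theta>\<bar> \<ge> pi" using cos_gt_m1[of \<Theta>] by force
  hence S: "(\<Sum>i\<in>F. \<bar>\<phi> i\<bar>) \<ge> pi" unfolding \<Theta>_def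
    using sum_abs[of \<phi> F] by linarith
  have Fne: "F \<noteq> {}" proof assume "F = {}" with S have "pi \<le> 0" by simp with pi_gt_zero show False by linarith qed
  have "(\<Sum>i\<in>F. \<bar>\<phi> i\<bar>) < (\<Sum>i\<in>F. pi/2)"
    using ab fF Fne by (intro sum_strict_mono) auto
  moreover have "(\<Sum>i\<in>F. pi/2) = real (card F) * (pi/2)" by simp
  ultimately have "pi < real (card F) * (pi/2)" using S by linarith
  hence "2 * pi < real (card F) * pi" by (simp add: field_simps)
  hence "2 < real (card F)" using pi_gt_zero by (simp add: mult_less_cancel_right)
  thus k4: "k \<ge> 4" using cF by linarith
  have B: "(\<Prod>i\<in>F. 2 * cos \<bar>\<phi> i\<bar>) \<le> (2 * cos (pi / real (k - 1))) ^ (k - 1)"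
    using jensen_cos[OF fF k4 cF, of "\<lambda>i. \<bar>\<phi> i\<bar>"] S ab by auto
  have "R \<le> (\<Prod>i\<in>F. 2 * cos \<bar>\<phi> i\<bar>)"
    unfolding R_def using ab by (intro prod_mono) auto
  thus "- t \<le> (2 * cos (pi / real (k - 1))) ^ (k - 1)" using B tR by simp
  assume strict: "\<forall>i\<in>F. cmod (\<zeta> i - 1) < 1"
  obtain i0 where i0: "i0 \<in> F" using Fne by auto
  have "R < (\<Prod>i\<in>F. 2 * cos \<bar>\<phi> i\<bar>)"
    unfolding R_def
  proof (rule prod_mono_strict[OF i0])
    show "cmod (\<zeta> i0) < 2 * cos \<bar>\<phi> i0\<bar>"
      using arg_lemma(3)[of "\<zeta> i0"] z strict i0 by (auto simp: \<phi>_def)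
    show "finite F" by fact
    show "0 \<le> cmod (\<zeta> i) \<and> cmod (\<zeta> i) \<le> 2 * cos \<bar>\<phi> i\<bar>" if "i \<in> F" for i
      using ab that by auto
    show "0 < 2 * cos \<bar>\<phi> i\<bar>" if "i \<in> F" for i
      using ab[OF that] by (intro mult_pos_pos cos_gt_zero_pi) auto
  qed
  thus "- t < (2 * cos (pi / real (k - 1))) ^ (k - 1)" using B tR by simp
qed


definition loB :: "nat \<Rightarrow> real" where "loB k = - 1 / (2 ^ (k - 1) - 1)"
definition hiB :: "nat \<Rightarrow> real" where "hiB k = 1 / (2 ^ (k - 1) * cos (pi / real (k - 1)) ^ (k - 1) + 1)"

lemma bounds_basic:
  assumes k: "k \<ge> 3"
  shows "(2::real) ^ (k - 1) \<ge> 4" "loB k < 0" "0 < hiB k" "hiB k \<le> 1"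
    "2 ^ (k - 1) * cos (pi / real (k - 1)) ^ (k - 1) \<ge> 0"
    "(2 * cos (pi / real (k - 1))) ^ (k - 1) = 2 ^ (k - 1) * cos (pi / real (k - 1)) ^ (k - 1)"
proof -
  have "(2::real) ^ 2 \<le> 2 ^ (k - 1)" using k by (intro power_increasing) auto
  thus p4: "(2::real) ^ (k - 1) \<ge> 4" by simp
  thus "loB k < 0" by (simp add: loB_def)
  have "real (k - 1) \<ge> 2" using k by linarith
  hence "pi / real (k - 1) \<le> pi / 2" by (intro divide_left_mono) auto
  moreover have "pi / real (k - 1) \<ge> 0" by simp
  moreover have "- (pi/2) \<le> pi / real (k - 1)"
    using order_trans[of "- (pi/2)" 0 "pi / real (k - 1)"] by simp
  ultimately have "cos (pi / real (k - 1)) \<ge> 0" using cos_ge_zero by blast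
  thus M0: "2 ^ (k - 1) * cos (pi / real (k - 1)) ^ (k - 1) \<ge> 0" by simp
  thus "0 < hiB k" "hiB k \<le> 1" by (auto simp: hiB_def)
  show "(2 * cos (pi / real (k - 1))) ^ (k - 1) = 2 ^ (k - 1) * cos (pi / real (k - 1)) ^ (k - 1)"
    by (simp add: power_mult_distrib)
qed

lemma norm_prod_1plus:
  fixes v :: "'a \<Rightarrow> complex"
  assumes "finite F" "\<forall>i\<in>F. cmod (v i) \<le> 1"
  shows "cmod (\<Prod>i\<in>F. 1 + v i) \<le> 2 ^ card F"
    "F \<noteq> {} \<Longrightarrow> \<forall>i\<in>F. cmod (v i) < 1 \<Longrightarrow> cmod (\<Prod>i\<in>F. 1 + v i) < 2 ^ card F"
proof -
  have le: "cmod (1 + v i) \<le> 2" if "i \<in> F" for i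
    using norm_triangle_ineq[of 1 "v i"] assms that by auto
  have "cmod (\<Prod>i\<in>F. 1 + v i) = (\<Prod>i\<in>F. cmod (1 + v i))" by (simp add: prod_norm)
  also have "\<dots> \<le> (\<Prod>i\<in>F. 2)" using le by (intro prod_mono) auto
  finally show "cmod (\<Prod>i\<in>F. 1 + v i) \<le> 2 ^ card F" by simp
  assume ne: "F \<noteq> {}" and lt: "\<forall>i\<in>F. cmod (v i) < 1"
  obtain i0 where i0: "i0 \<in> F" using ne by auto
  have "(\<Prod>i\<in>F. cmod (1 + v i)) < (\<Prod>i\<in>F. 2)"
  proof (rule prod_mono_strict[OF i0])
    show "cmod (1 + v i0) < 2" using norm_triangle_ineq[of 1 "v i0"] lt i0 by auto
  qed (use assms le in auto)
  thus "cmod (\<Prod>i\<in>F. 1 + v i) < 2 ^ card F" by (simp add: prod_norm)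
qed

lemma alpha_zero:
  assumes "alpha (of_real b) F v = 0"
  shows "b \<noteq> 0" "(\<Prod>i\<in>F. 1 + v i) = of_real ((b - 1) / b)"
proof -
  show b0: "b \<noteq> 0" using assms by (auto simp: alpha_def)
  have "of_real b * (\<Prod>i\<in>F. 1 + v i) = of_real (b - 1)" using assms
    by (simp add: alpha_def algebra_simps eq_neg_iff_add_eq_0)
  thus "(\<Prod>i\<in>F. 1 + v i) = of_real ((b - 1) / b)" using b0 by (simp add: field_simps)
qed

lemma neg_t_bound:
  assumes k: "k \<ge> 3" and b: "b < 0"
  shows "loB k \<le> b \<Longrightarrow> (b - 1) / b \<ge> 2 ^ (k - 1)" "loB k < b \<Longrightarrow> (b - 1) / b > 2 ^ (k - 1)"
proof -
  define N :: real where "N = 2 ^ (k - 1) - 1"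
  have N: "N > 0" using bounds_basic(1)[OF k] by (simp add: N_def)
  have eq: "(b - 1) / b = 1 + 1 / (- b)" using b by (simp add: field_simps)
  have lo: "loB k = - 1 / N" by (simp add: loB_def N_def)
  show "(b - 1) / b \<ge> 2 ^ (k - 1)" if "loB k \<le> b"
  proof -
    have "-b \<le> 1 / N" using that lo by simp
    hence "N \<le> 1 / (-b)" using N b by (simp add: field_simps)
    thus ?thesis unfolding eq N_def by simp
  qed
  show "(b - 1) / b > 2 ^ (k - 1)" if "loB k < b"
  proof -
    have "-b < 1 / N" using that lo by simp
    hence "N < 1 / (-b)" using N b by (simp add: field_simps)
    thus ?thesis unfolding eq N_def by simp
  qed
qed

lemma pos_t_bound:
  assumes k: "k \<ge> 3" and b: "0 < b" "b < 1"
  shows "b \<le> hiB k \<Longrightarrow> (1 - b) / b \<ge> (2 * cos (pi / real (k - 1))) ^ (k - 1)"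
    "b < hiB k \<Longrightarrow> (1 - b) / b > (2 * cos (pi / real (k - 1))) ^ (k - 1)"
proof -
  define M where "M = (2 * cos (pi / real (k - 1))) ^ (k - 1)"
  have M: "M \<ge> 0" using bounds_basic[OF k] by (simp add: M_def)
  have hi: "hiB k = 1 / (M + 1)" using bounds_basic(6)[OF k] by (simp add: hiB_def M_def)
  have eq: "(1 - b) / b = 1 / b - 1" using b by (simp add: field_simps)
  show "(1 - b) / b \<ge> (2 * cos (pi / real (k - 1))) ^ (k - 1)" if "b \<le> hiB k"
  proof -
    have "b * (M + 1) \<le> 1" using that hi M by (simp add: field_simps)
    hence "M + 1 \<le> 1 / b" using b by (simp add: field_simps)
    thus ?thesis unfolding eq M_def[symmetric] by simp
  qed
  show "(1 - b) / b > (2 * cos (pi / real (k - 1))) ^ (k - 1)" if "b < hiB k"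
  proof -
    have "b * (M + 1) < 1" using that hi M by (simp add: field_simps)
    hence "M + 1 < 1 / b" using b by (simp add: field_simps)
    thus ?thesis unfolding eq M_def[symmetric] by simp
  qed
qed

lemma alpha_nz:
  assumes k: "k \<ge> 3" and fF: "finite F" and cF: "1 \<le> card F" "card F \<le> k - 1"
    and vb: "\<forall>i\<in>F. cmod (v i) \<le> 1"
    and cases: "(loB k \<le> b \<and> b \<le> hiB k \<and> (\<forall>i\<in>F. cmod (v i) < 1)) \<or> (loB k < b \<and> b < hiB k)"
  shows "alpha (of_real b) F v \<noteq> 0"
proof
  assume a0: "alpha (of_real b) F v = 0"
  note az = alpha_zero[OF a0]
  have Fne: "F \<noteq> {}" using cF by auto
  have bb: "loB k \<le> b" "b \<le> hiB k" using cases by auto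
  have pk: "(2::real) ^ card F \<le> 2 ^ (k - 1)" using cF by (intro power_increasing) auto
  have nP: "cmod (\<Prod>i\<in>F. 1 + v i) = \<bar>(b - 1) / b\<bar>" using az(2) by (simp only: norm_of_real)
  show False
  proof (cases "b < 0")
    case True
    have "(b - 1) / b > 0" using True by (intro divide_neg_neg) auto
    hence nP2: "cmod (\<Prod>i\<in>F. 1 + v i) = (b - 1) / b" using nP by linarith
    show False
    proof (cases "\<forall>i\<in>F. cmod (v i) < 1")
      case True
      have "cmod (\<Prod>i\<in>F. 1 + v i) < 2 ^ card F" using norm_prod_1plus(2)[OF fF vb Fne True] .
      moreover have "(b - 1) / b \<ge> 2 ^ (k - 1)" using neg_t_bound(1)[OF k \<open>b<0\<close> bb(1)] .
      ultimately show False using nP2 pk by linarith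
    next
      case False
      hence "loB k < b" using cases by auto
      hence "(b - 1) / b > 2 ^ (k - 1)" using neg_t_bound(2)[OF k \<open>b<0\<close>] by simp
      moreover have "cmod (\<Prod>i\<in>F. 1 + v i) \<le> 2 ^ card F" using norm_prod_1plus(1)[OF fF vb] .
      ultimately show False using nP2 pk by linarith
    qed
  next
    case False
    hence bpos: "b > 0" using az(1) by simp
    have b1: "b \<le> 1" using bb bounds_basic(4)[OF k] by simp
    show False
    proof (cases "b = 1")
      case True
      hence "(\<Prod>i\<in>F. 1 + v i) = 0" using az by simp
      then obtain i where i: "i \<in> F" "1 + v i = 0" using fF by auto
      have "v i = (1 + v i) - 1" by simp
      hence "v i = -1" using i(2) by simp
      hence "cmod (v i) = 1" by simp
      moreover have "\<not> (b < hiB k)" using True bounds_basic(4)[OF k] by simp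
      ultimately show False using cases i by auto
    next
      case False
      hence blt: "b < 1" using b1 by simp
      define t where "t = (b - 1) / b"
      have t0: "t < 0" using bpos blt by (simp add: t_def divide_neg_pos)
      have "- t = (- (b - 1)) / b" unfolding t_def by (rule minus_divide_left)
      hence mt: "- t = (1 - b) / b" by simp
      have nz: "\<forall>i\<in>F. 1 + v i \<noteq> 0"
      proof
        fix i assume "i \<in> F"
        show "1 + v i \<noteq> 0"
        proof
          assume "1 + v i = 0"
          hence "(\<Prod>i\<in>F. 1 + v i) = 0" using fF \<open>i \<in> F\<close> by (meson prod_zero_iff)
          thus False using az t0 t_def by simp
        qed
      qed
      have z: "\<forall>i\<in>F. (1 + v i) \<noteq> 0 \<and> cmod ((1 + v i) - 1) \<le> 1" using nz vb by simp
      have pr: "(\<Prod>i\<in>F. 1 + v i) = of_real t" using az t_def by simp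
      note NR = neg_real_prod[OF fF z pr t0 k cF(2)]
      show False
      proof (cases "\<forall>i\<in>F. cmod (v i) < 1")
        case True
        have "- t < (2 * cos (pi / real (k - 1))) ^ (k - 1)" using NR(3) True by simp
        moreover have "(1 - b) / b \<ge> (2 * cos (pi / real (k - 1))) ^ (k - 1)"
          using pos_t_bound(1)[OF k bpos blt bb(2)] .
        ultimately show False using mt by simp
      next
        case False
        hence "b < hiB k" using cases by auto
        hence "(1 - b) / b > (2 * cos (pi / real (k - 1))) ^ (k - 1)"
          using pos_t_bound(2)[OF k bpos blt] by simp
        thus False using NR(2) mt by simp
      qed
    qed
  qed
qed


lemma edge_good_range:
  assumes k: "k \<ge> 3" and fe: "finite e" and ce: "2 \<le> card e" "card e \<le> k"
    and bl: "loB k \<le> b" and bh: "b \<le> hiB k"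
  shows "edge_good e (of_real b)"
  unfolding edge_good_def
proof (intro allI impI)
  fix w :: "'a \<Rightarrow> complex"
  assume wb: "\<forall>x\<in>e. cmod (w x) < 1"
  have ne: "e \<noteq> {}" using ce by auto
  then obtain x0 where x0: "x0 \<in> e" by auto
  define F where "F = e - {x0}"
  have fF: "finite F" using fe by (simp add: F_def)
  have cF: "card F = card e - 1" using x0 fe by (simp add: F_def)
  hence cF1: "1 \<le> card F" "card F \<le> k - 1" using ce by auto
  have wF: "\<forall>i\<in>F. cmod (w i) < 1" "\<forall>i\<in>F. cmod (w i) \<le> 1" using wb by (auto simp: F_def less_imp_le)
  let ?b = "complex_of_real b"
  have Q: "Qe e ?b w = alpha ?b F w + beta ?b F w * w x0"
  proof -
    have p1: "(\<Prod>x\<in>e. w x) = w x0 * (\<Prod>x\<in>F. w x)" using fe x0 by (simp add: F_def prod.remove)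
    have p2: "(\<Prod>x\<in>e. 1 + w x) = (1 + w x0) * (\<Prod>x\<in>F. 1 + w x)" using fe x0 by (simp add: F_def prod.remove)
    show ?thesis unfolding Qe_formula[OF fe ne] p1 p2 alpha_def beta_def by (simp add: algebra_simps)
  qed
  have lohi: "loB k < hiB k" using bounds_basic[OF k] by simp
  have anz: "alpha ?b F w \<noteq> 0"
    using alpha_nz[OF k fF cF1 wF(2), of b] bl bh wF(1) by auto
  define h where "h c = cmod (alpha (of_real c) F w) - cmod (beta (of_real c) F w)" for c
  have "h b \<ge> 0"
  proof (rule continuous_ge_on_closure[where S="{loB k<..<hiB k}" and f=h and x=b and a=0])
    show "continuous_on (closure {loB k<..<hiB k}) h"
      unfolding h_def alpha_def beta_def by (intro continuous_intros)
    show "b \<in> closure {loB k<..<hiB k}" using lohi bl bh by simp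
    show "h c \<ge> 0" if "c \<in> {loB k<..<hiB k}" for c
    proof -
      have "\<forall>v. (\<forall>i\<in>F. cmod (v i) \<le> 1) \<longrightarrow> alpha (of_real c) F v \<noteq> 0"
        using alpha_nz[OF k fF cF1] that by auto
      from maxmod[OF fF this] wF(2) show ?thesis by (simp add: h_def)
    qed
  qed
  hence le: "cmod (beta ?b F w) \<le> cmod (alpha ?b F w)" by (simp add: h_def)
  have x: "cmod (w x0) < 1" using wb x0 by auto
  show "Qe e ?b w \<noteq> 0"
  proof
    assume "Qe e ?b w = 0"
    hence "alpha ?b F w = - (beta ?b F w * w x0)" using Q by (simp add: eq_neg_iff_add_eq_0)
    hence "cmod (alpha ?b F w) = cmod (beta ?b F w) * cmod (w x0)" by (simp add: norm_mult)
    also have "\<dots> \<le> cmod (alpha ?b F w) * cmod (w x0)" using le by (simp add: mult_right_mono)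
    also have "\<dots> < cmod (alpha ?b F w)" using x anz by simp
    finally show False by simp
  qed
qed

theorem part1:
  assumes k: "k \<ge> 3" and hg: "hypergraph V E" and ce: "\<forall>e\<in>E. 2 \<le> card e \<and> card e \<le> k"
    and bl: "loB k \<le> b" and bh: "b \<le> hiB k" and Z: "ising_Z V E b z = 0"
  shows "cmod z = 1"
proof (rule good_unit_circle[OF hg _ Z])
  have fV: "finite V" and eV: "\<forall>e\<in>E. e \<subseteq> V" using hg by (auto simp: hypergraph_def)
  show "good V E (of_real b)"
  proof (rule asano_main[OF fV eV], intro ballI)
    fix e assume "e \<in> E"
    hence "finite e" "2 \<le> card e" "card e \<le> k" using ce eV fV by (auto intro: finite_subset)
    thus "edge_good e (of_real b)" using edge_good_range[OF k _ _ _ bl bh] by auto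
  qed
qed


fun Cp :: "nat \<Rightarrow> complex poly" where
  "Cp 0 = [:2:]"
| "Cp (Suc 0) = [:0, 1:]"
| "Cp (Suc (Suc n)) = [:0, 1:] * Cp (Suc n) - Cp n"

lemma Cp_val: "poly (Cp n) (complex_of_real (2 * cos \<psi>)) = complex_of_real (2 * cos (real n * \<psi>))"
proof (induction n rule: Cp.induct)
  case 1 thus ?case by simp
next
  case 2 thus ?case by simp
next
  case (3 n)
  define u where "u = real (Suc n) * \<psi>"
  have e1: "real (Suc (Suc n)) * \<psi> = u + \<psi>" and e0: "real n * \<psi> = u - \<psi>"
    by (simp_all add: u_def algebra_simps)
  have "2 * cos \<psi> * (2 * cos u) - 2 * cos (u - \<psi>) = 2 * cos (u + \<psi>)"
    by (simp add: cos_add cos_diff algebra_simps)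
  hence C: "complex_of_real (2 * cos \<psi>) * complex_of_real (2 * cos u) - complex_of_real (2 * cos (u - \<psi>))
      = complex_of_real (2 * cos (u + \<psi>))"
    by (metis of_real_diff of_real_mult)
  have A: "poly (Cp (Suc n)) (complex_of_real (2 * cos \<psi>)) = complex_of_real (2 * cos u)"
    using 3 unfolding u_def by blast
  have B: "poly (Cp n) (complex_of_real (2 * cos \<psi>)) = complex_of_real (2 * cos (u - \<psi>))"
    using 3 unfolding e0[symmetric] by blast
  have "poly (Cp (Suc (Suc n))) (complex_of_real (2 * cos \<psi>)) =
      complex_of_real (2 * cos \<psi>) * poly (Cp (Suc n)) (complex_of_real (2 * cos \<psi>)) - poly (Cp n) (complex_of_real (2 * cos \<psi>))"
    by simp
  also have "\<dots> = complex_of_real (2 * cos (u + \<psi>))" unfolding A B C ..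
  finally show ?case unfolding e1 .
qed

lemma id1:
  fixes s c x y n n1 n2 sm sp :: real
  assumes "s \<noteq> 0" "n1 = n + 1" "n2 = n + 2" "sm = x* c - y* s" "sp = x* c + y* s"
  shows "2* c*(n1* x/s) + 2* y - n* sm/s = n2* sp/s"
proof -
  have "2* c*((n+1)* x) + 2* y* s - n*(x* c - y* s) = (n+2)*(x* c + y* s)"
    by (simp add: algebra_simps)
  thus ?thesis unfolding assms(2-5) using assms(1) by (simp add: field_simps)
qed

lemma id2:
  fixes s c x y n n1 n2 sm sp cm cp :: real
  assumes "s \<noteq> 0" "n1 = n + 1" "n2 = n + 2" "sm = x* c - y* s" "sp = x* c + y* s" "cm = y* c + x* s" "cp = y* c - x* s"
  shows "2* c*(n1*(x* c - n1* y* s)/(2* s^3)) + 2*(n1* x/s) - n*(sm* c - n* cm* s)/(2* s^3) = n2*(sp* c - n2* cp* s)/(2* s^3)"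
proof -
  have "2* c*((n+1)*(x* c - (n+1)* y* s)) + 2*((n+1)* x) * (2* s^2) - n*((x* c - y* s)* c - n*(y* c + x* s)* s) = (n+2)*((x* c + y* s)* c - (n+2)*(y* c - x* s)* s)"
    by (simp add: algebra_simps power2_eq_square)
  thus ?thesis unfolding assms(2-7) using assms(1) by (simp add: field_simps power2_eq_square power3_eq_cube)
qed

lemma Cp_d1:
  assumes s: "sin \<psi> \<noteq> 0"
  shows "poly (pderiv (Cp n)) (complex_of_real (2 * cos \<psi>)) = complex_of_real (real n * sin (real n * \<psi>) / sin \<psi>)"
proof (induction n rule: Cp.induct)
  case 1 thus ?case by (simp add: pderiv_pCons)
next
  case 2 thus ?case using s by (simp add: pderiv_pCons)
next
  case (3 n)
  define u where "u = real (Suc n) * \<psi>"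
  have e1: "real (Suc (Suc n)) * \<psi> = u + \<psi>" and e0: "real n * \<psi> = u - \<psi>"
    by (simp_all add: u_def algebra_simps)
  have pd: "pderiv (Cp (Suc (Suc n))) = [:0, 1:] * pderiv (Cp (Suc n)) + Cp (Suc n) - pderiv (Cp n)"
    by (simp add: pderiv_mult pderiv_diff pderiv_pCons)
  have "2 * cos \<psi> * (real (Suc n) * sin u / sin \<psi>) + 2 * cos u - real n * sin (u - \<psi>) / sin \<psi>
      = real (Suc (Suc n)) * sin (u + \<psi>) / sin \<psi>"
    by (rule id1[OF s]) (simp_all add: sin_add sin_diff)
  hence C: "complex_of_real (2 * cos \<psi>) * complex_of_real (real (Suc n) * sin u / sin \<psi>) + complex_of_real (2 * cos u)
      - complex_of_real (real n * sin (u - \<psi>) / sin \<psi>)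
      = complex_of_real (real (Suc (Suc n)) * sin (u + \<psi>) / sin \<psi>)"
    by (metis of_real_diff of_real_mult of_real_add)
  have A: "poly (pderiv (Cp (Suc n))) (complex_of_real (2 * cos \<psi>)) = complex_of_real (real (Suc n) * sin u / sin \<psi>)"
    using 3 unfolding u_def by blast
  have B: "poly (pderiv (Cp n)) (complex_of_real (2 * cos \<psi>)) = complex_of_real (real n * sin (u - \<psi>) / sin \<psi>)"
    using 3 unfolding e0[symmetric] by blast
  have V: "poly (Cp (Suc n)) (complex_of_real (2 * cos \<psi>)) = complex_of_real (2 * cos u)"
    unfolding u_def by (rule Cp_val)
  have "poly (pderiv (Cp (Suc (Suc n)))) (complex_of_real (2 * cos \<psi>)) =
      complex_of_real (2 * cos \<psi>) * poly (pderiv (Cp (Suc n))) (complex_of_real (2 * cos \<psi>))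
      + poly (Cp (Suc n)) (complex_of_real (2 * cos \<psi>)) - poly (pderiv (Cp n)) (complex_of_real (2 * cos \<psi>))"
    unfolding pd by simp
  also have "\<dots> = complex_of_real (real (Suc (Suc n)) * sin (u + \<psi>) / sin \<psi>)" unfolding A B C V ..
  finally show ?case unfolding e1 .
qed

lemma Cp_d2:
  assumes s: "sin \<psi> \<noteq> 0"
  shows "poly (pderiv (pderiv (Cp n))) (complex_of_real (2 * cos \<psi>)) =
    complex_of_real (real n * (sin (real n * \<psi>) * cos \<psi> - real n * cos (real n * \<psi>) * sin \<psi>) / (2 * sin \<psi> ^ 3))"
proof (induction n rule: Cp.induct)
  case 1 thus ?case by (simp add: pderiv_pCons)
next
  case 2 thus ?case using s by (simp add: pderiv_pCons)
next
  case (3 n)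
  define u where "u = real (Suc n) * \<psi>"
  have e1: "real (Suc (Suc n)) * \<psi> = u + \<psi>" and e0: "real n * \<psi> = u - \<psi>"
    by (simp_all add: u_def algebra_simps)
  have pd: "pderiv (pderiv (Cp (Suc (Suc n)))) = [:0, 1:] * pderiv (pderiv (Cp (Suc n))) + 2 * pderiv (Cp (Suc n)) - pderiv (pderiv (Cp n))"
    by (simp add: pderiv_mult pderiv_diff pderiv_pCons pderiv_add algebra_simps)
  have R: "2 * cos \<psi> * (real (Suc n) * (sin u * cos \<psi> - real (Suc n) * cos u * sin \<psi>) / (2 * sin \<psi> ^ 3))
      + 2 * (real (Suc n) * sin u / sin \<psi>)
      - real n * (sin (u - \<psi>) * cos \<psi> - real n * cos (u - \<psi>) * sin \<psi>) / (2 * sin \<psi> ^ 3)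
      = real (Suc (Suc n)) * (sin (u + \<psi>) * cos \<psi> - real (Suc (Suc n)) * cos (u + \<psi>) * sin \<psi>) / (2 * sin \<psi> ^ 3)"
    by (rule id2[OF s]) (simp_all add: sin_add sin_diff cos_add cos_diff)
  have C: "complex_of_real (2 * cos \<psi>) * complex_of_real (real (Suc n) * (sin u * cos \<psi> - real (Suc n) * cos u * sin \<psi>) / (2 * sin \<psi> ^ 3))
      + 2 * complex_of_real (real (Suc n) * sin u / sin \<psi>)
      - complex_of_real (real n * (sin (u - \<psi>) * cos \<psi> - real n * cos (u - \<psi>) * sin \<psi>) / (2 * sin \<psi> ^ 3))
      = complex_of_real (real (Suc (Suc n)) * (sin (u + \<psi>) * cos \<psi> - real (Suc (Suc n)) * cos (u + \<psi>) * sin \<psi>) / (2 * sin \<psi> ^ 3))"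
    using arg_cong[where f=complex_of_real, OF R]
    by (simp only: of_real_add of_real_diff of_real_mult of_real_divide of_real_numeral of_real_power)
  have A: "poly (pderiv (pderiv (Cp (Suc n)))) (complex_of_real (2 * cos \<psi>)) = complex_of_real (real (Suc n) * (sin u * cos \<psi> - real (Suc n) * cos u * sin \<psi>) / (2 * sin \<psi> ^ 3))"
    using 3 unfolding u_def by blast
  have B: "poly (pderiv (pderiv (Cp n))) (complex_of_real (2 * cos \<psi>)) = complex_of_real (real n * (sin (u - \<psi>) * cos \<psi> - real n * cos (u - \<psi>) * sin \<psi>) / (2 * sin \<psi> ^ 3))"
    using 3 unfolding e0[symmetric] by blast
  have V: "poly (pderiv (Cp (Suc n))) (complex_of_real (2 * cos \<psi>)) = complex_of_real (real (Suc n) * sin u / sin \<psi>)"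
    unfolding u_def by (rule Cp_d1[OF s])
  have "poly (pderiv (pderiv (Cp (Suc (Suc n))))) (complex_of_real (2 * cos \<psi>)) =
      complex_of_real (2 * cos \<psi>) * poly (pderiv (pderiv (Cp (Suc n)))) (complex_of_real (2 * cos \<psi>))
      + 2 * poly (pderiv (Cp (Suc n))) (complex_of_real (2 * cos \<psi>)) - poly (pderiv (pderiv (Cp n))) (complex_of_real (2 * cos \<psi>))"
    unfolding pd by simp
  also have "\<dots> = complex_of_real (real (Suc (Suc n)) * (sin (u + \<psi>) * cos \<psi> - real (Suc (Suc n)) * cos (u + \<psi>) * sin \<psi>) / (2 * sin \<psi> ^ 3))"
    unfolding A B C V ..
  finally show ?case unfolding e1 .
qed


definition Pr :: "(nat \<Rightarrow> real) \<Rightarrow> nat \<Rightarrow> complex poly" where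
  "Pr \<rho> n = (\<Prod>i<n. [:- complex_of_real (\<rho> i), 1:])"

lemma Pr_derivs_conj:
  "(\<forall>i<n. x \<noteq> \<rho> i) \<longrightarrow>
    poly (Pr \<rho> n) (complex_of_real x) = complex_of_real (\<Prod>i<n. x - \<rho> i) \<and>
    poly (pderiv (Pr \<rho> n)) (complex_of_real x) = poly (Pr \<rho> n) (complex_of_real x) * complex_of_real (\<Sum>i<n. 1 / (x - \<rho> i)) \<and>
    poly (pderiv (pderiv (Pr \<rho> n))) (complex_of_real x) = poly (Pr \<rho> n) (complex_of_real x) *
        complex_of_real ((\<Sum>i<n. 1 / (x - \<rho> i))\<^sup>2 - (\<Sum>i<n. (1 / (x - \<rho> i))\<^sup>2))"
proof (induction n)
  case 0
  show ?case by (simp add: Pr_def)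
next
  case (Suc n)
  show ?case
  proof (intro impI)
  assume pr: "\<forall>i<Suc n. x \<noteq> \<rho> i"
  have h: "\<forall>i<n. x \<noteq> \<rho> i" using pr by auto
  have IH: "poly (Pr \<rho> n) (complex_of_real x) = complex_of_real (\<Prod>i<n. x - \<rho> i) \<and>
    poly (pderiv (Pr \<rho> n)) (complex_of_real x) = poly (Pr \<rho> n) (complex_of_real x) * complex_of_real (\<Sum>i<n. 1 / (x - \<rho> i)) \<and>
    poly (pderiv (pderiv (Pr \<rho> n))) (complex_of_real x) = poly (Pr \<rho> n) (complex_of_real x) *
        complex_of_real ((\<Sum>i<n. 1 / (x - \<rho> i))\<^sup>2 - (\<Sum>i<n. (1 / (x - \<rho> i))\<^sup>2))" using Suc.IH h by blast
  have dn: "x - \<rho> n \<noteq> 0" using pr by auto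
  define a where "a = \<rho> n"
  define d where "d = x - a"
  have d0: "d \<noteq> 0" using dn by (simp add: d_def a_def)
  define A where "A = (\<Sum>i<n. 1 / (x - \<rho> i))"
  define B where "B = (\<Sum>i<n. (1 / (x - \<rho> i))\<^sup>2)"
  define u where "u = poly (Pr \<rho> n) (complex_of_real x)"
  have IH0: "u = complex_of_real (\<Prod>i<n. x - \<rho> i)" using IH by (simp add: u_def)
  have IH1: "poly (pderiv (Pr \<rho> n)) (complex_of_real x) = u * complex_of_real A"
    using IH by (simp add: u_def A_def)
  have IH2: "poly (pderiv (pderiv (Pr \<rho> n))) (complex_of_real x) = u * complex_of_real (A\<^sup>2 - B)"
    using IH by (simp add: u_def A_def B_def)
  have PS: "Pr \<rho> (Suc n) = Pr \<rho> n * [:- complex_of_real a, 1:]"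
    by (simp add: Pr_def a_def)
  have dL: "pderiv [:- complex_of_real a, 1:] = 1" by (simp add: pderiv_pCons)
  have D1: "pderiv (Pr \<rho> (Suc n)) = Pr \<rho> n + [:- complex_of_real a, 1:] * pderiv (Pr \<rho> n)"
    unfolding PS pderiv_mult dL by simp
  have D2: "pderiv (pderiv (Pr \<rho> (Suc n))) = 2 * pderiv (Pr \<rho> n) + [:- complex_of_real a, 1:] * pderiv (pderiv (Pr \<rho> n))"
    unfolding D1 pderiv_add pderiv_mult dL by (simp only: mult_1_right mult_2 add_ac)
  have lin: "poly [:- complex_of_real a, 1:] (complex_of_real x) = complex_of_real d"
    by (simp add: d_def)
  have sA: "(\<Sum>i<Suc n. 1 / (x - \<rho> i)) = A + 1 / d" by (simp add: A_def d_def a_def)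
  have sB: "(\<Sum>i<Suc n. (1 / (x - \<rho> i))\<^sup>2) = B + (1 / d)\<^sup>2" by (simp add: B_def d_def a_def)
  have V0: "poly (Pr \<rho> (Suc n)) (complex_of_real x) = u * complex_of_real d"
    unfolding PS poly_mult lin by (simp add: u_def)
  have R0: "poly (Pr \<rho> (Suc n)) (complex_of_real x) = complex_of_real (\<Prod>i<Suc n. x - \<rho> i)"
    using V0 IH0 by (simp add: d_def a_def)
  have "poly (pderiv (Pr \<rho> (Suc n))) (complex_of_real x) = u + complex_of_real d * (u * complex_of_real A)"
    unfolding D1 poly_add poly_mult lin IH1 by (simp add: u_def)
  also have "\<dots> = (u * complex_of_real d) * complex_of_real (A + 1 / d)"
    using d0 by (simp add: field_simps)
  finally have R1: "poly (pderiv (Pr \<rho> (Suc n))) (complex_of_real x) =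
      poly (Pr \<rho> (Suc n)) (complex_of_real x) * complex_of_real (\<Sum>i<Suc n. 1 / (x - \<rho> i))"
    unfolding V0 sA .
  have "poly (pderiv (pderiv (Pr \<rho> (Suc n)))) (complex_of_real x) = 2 * (u * complex_of_real A) + complex_of_real d * (u * complex_of_real (A\<^sup>2 - B))"
    unfolding D2 poly_add poly_mult lin IH1 IH2 by simp
  also have "\<dots> = (u * complex_of_real d) * complex_of_real ((A + 1 / d)\<^sup>2 - (B + (1 / d)\<^sup>2))"
    using d0 by (simp add: field_simps power2_eq_square)
  finally have R2: "poly (pderiv (pderiv (Pr \<rho> (Suc n)))) (complex_of_real x) = poly (Pr \<rho> (Suc n)) (complex_of_real x) *
        complex_of_real ((\<Sum>i<Suc n. 1 / (x - \<rho> i))\<^sup>2 - (\<Sum>i<Suc n. (1 / (x - \<rho> i))\<^sup>2))"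
    unfolding V0 sA sB .
  show "poly (Pr \<rho> (Suc n)) (complex_of_real x) = complex_of_real (\<Prod>i<Suc n. x - \<rho> i) \<and>
    poly (pderiv (Pr \<rho> (Suc n))) (complex_of_real x) = poly (Pr \<rho> (Suc n)) (complex_of_real x) * complex_of_real (\<Sum>i<Suc n. 1 / (x - \<rho> i)) \<and>
    poly (pderiv (pderiv (Pr \<rho> (Suc n)))) (complex_of_real x) = poly (Pr \<rho> (Suc n)) (complex_of_real x) *
        complex_of_real ((\<Sum>i<Suc n. 1 / (x - \<rho> i))\<^sup>2 - (\<Sum>i<Suc n. (1 / (x - \<rho> i))\<^sup>2))"
    using R0 R1 R2 by blast
  qed
qed

lemma Pr_derivs:
  assumes "\<forall>i<n. x \<noteq> \<rho> i"
  shows "poly (Pr \<rho> n) (complex_of_real x) = complex_of_real (\<Prod>i<n. x - \<rho> i)"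
    "poly (pderiv (Pr \<rho> n)) (complex_of_real x) = poly (Pr \<rho> n) (complex_of_real x) * complex_of_real (\<Sum>i<n. 1 / (x - \<rho> i))"
    "poly (pderiv (pderiv (Pr \<rho> n))) (complex_of_real x) = poly (Pr \<rho> n) (complex_of_real x) *
        complex_of_real ((\<Sum>i<n. 1 / (x - \<rho> i))\<^sup>2 - (\<Sum>i<n. (1 / (x - \<rho> i))\<^sup>2))"
  using Pr_derivs_conj[of n x \<rho>] assms by auto

lemma laguerre:
  assumes "\<forall>i<n. x \<noteq> \<rho> i"
  shows "\<exists>L \<ge> 0. (of_nat n - 1) * (poly (pderiv (Pr \<rho> n)) (complex_of_real x))\<^sup>2
          - of_nat n * poly (Pr \<rho> n) (complex_of_real x) * poly (pderiv (pderiv (Pr \<rho> n))) (complex_of_real x)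
          = complex_of_real L"
proof -
  define A where "A = (\<Sum>i<n. 1 / (x - \<rho> i))"
  define B where "B = (\<Sum>i<n. (1 / (x - \<rho> i))\<^sup>2)"
  define p0 where "p0 = (\<Prod>i<n. x - \<rho> i)"
  note D = Pr_derivs[OF assms]
  have cs: "A\<^sup>2 \<le> B * real n"
    unfolding A_def B_def using sum_squared_le_sum_of_squares[of "\<lambda>i. 1 / (x - \<rho> i)" "{..<n}"] by simp
  have "(of_nat n - 1) * (poly (pderiv (Pr \<rho> n)) (complex_of_real x))\<^sup>2
          - of_nat n * poly (Pr \<rho> n) (complex_of_real x) * poly (pderiv (pderiv (Pr \<rho> n))) (complex_of_real x)
        = complex_of_real ((real n - 1) * (p0 * A)\<^sup>2 - real n * p0 * (p0 * (A\<^sup>2 - B)))"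
    unfolding D(2,3) unfolding D(1) by (simp add: A_def B_def p0_def)
  also have "(real n - 1) * (p0 * A)\<^sup>2 - real n * p0 * (p0 * (A\<^sup>2 - B)) = p0\<^sup>2 * (B * real n - A\<^sup>2)"
    by (simp add: power2_eq_square algebra_simps)
  finally show ?thesis using cs by (intro exI[of _ "p0\<^sup>2 * (B * real n - A\<^sup>2)"]) auto
qed


lemma Cp_inv:
  assumes "s \<noteq> 0"
  shows "poly (Cp n) (s + 1/s) = s ^ n + 1 / s ^ n"
proof (induction n rule: Cp.induct)
  case 1 thus ?case by simp
next
  case 2 thus ?case by simp
next
  case (3 n)
  have "poly (Cp (Suc (Suc n))) (s + 1/s) = (s + 1/s) * poly (Cp (Suc n)) (s + 1/s) - poly (Cp n) (s + 1/s)"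
    by simp
  also have "\<dots> = (s + 1/s) * (s ^ Suc n + 1 / s ^ Suc n) - (s ^ n + 1 / s ^ n)"
    using 3 by simp
  also have "\<dots> = s ^ Suc (Suc n) + 1 / s ^ Suc (Suc n)"
    using assms by (simp add: field_simps)
  finally show ?case .
qed


lemma Cp_coeff: "(\<forall>j>n. coeff (Cp n) j = 0) \<and> (n \<ge> 1 \<longrightarrow> coeff (Cp n) n = 1)"
proof (induction n rule: Cp.induct)
  case 1 thus ?case by (simp add: coeff_pCons split: nat.splits)
next
  case 2 thus ?case by (simp add: coeff_pCons split: nat.splits)
next
  case (3 n)
  show ?case using 3 by (auto simp: coeff_pCons split: nat.splits)
qed

definition Pb :: "real \<Rightarrow> nat \<Rightarrow> complex poly" where
  "Pb b k = smult (1 - complex_of_real b) (Cp k) + smult (complex_of_real b) (monom 1 k)"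

lemma Pb_degree:
  assumes "k \<ge> 1"
  shows "degree (Pb b k) = k" "lead_coeff (Pb b k) = 1"
proof -
  have c1: "coeff (Pb b k) k = 1" using Cp_coeff[of k] assms by (simp add: Pb_def coeff_monom)
  have c0: "\<forall>j>k. coeff (Pb b k) j = 0" using Cp_coeff[of k] by (simp add: Pb_def coeff_monom)
  have "degree (Pb b k) \<le> k" using c0 by (intro degree_le) auto
  moreover have "k \<le> degree (Pb b k)" using c1 by (intro le_degree) simp
  ultimately show d: "degree (Pb b k) = k" by simp
  show "lead_coeff (Pb b k) = 1" using c1 d by simp
qed

lemma q_Pb:
  assumes "s \<noteq> 0"
  shows "(1 - complex_of_real b) * (1 + (s^2) ^ k) + complex_of_real b * (1 + s^2) ^ k = s ^ k * poly (Pb b k) (s + 1/s)"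
proof -
  have "poly (Pb b k) (s + 1/s) = (1 - complex_of_real b) * (s ^ k + 1 / s ^ k) + complex_of_real b * (s + 1/s) ^ k"
    by (simp add: Pb_def Cp_inv[OF assms] poly_monom)
  hence "s ^ k * poly (Pb b k) (s + 1/s) = s ^ k * ((1 - complex_of_real b) * (s ^ k + 1 / s ^ k) + complex_of_real b * (s + 1/s) ^ k)"
    by (simp only:)
  also have "\<dots> = (1 - complex_of_real b) * (s ^ k * (s ^ k + 1 / s ^ k)) + complex_of_real b * (s ^ k * (s + 1/s) ^ k)"
    by (simp only: distrib_left mult.left_commute)
  also have "s ^ k * (s + 1/s) ^ k = (s * (s + 1/s)) ^ k" by (simp only: power_mult_distrib)
  also have "s * (s + 1/s) = 1 + s^2" using assms by (simp add: field_simps power2_eq_square)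
  also have "s ^ k * (s ^ k + 1 / s ^ k) = 1 + (s^2) ^ k"
  proof -
    have "s ^ k * (s ^ k + 1 / s ^ k) = s ^ k * s ^ k + 1" using assms by (simp add: field_simps)
    also have "s ^ k * s ^ k = (s^2) ^ k" by (simp add: power_mult_distrib[symmetric] power2_eq_square)
    finally show ?thesis by simp
  qed
  finally show ?thesis by simp
qed


lemma lag_identity:
  fixes b c s W kk :: real
  assumes s0: "s \<noteq> 0" and sc: "s^2 + c^2 = 1"
  defines "D \<equiv> b * (2* c* W) - (1 - b)"
  shows "(kk - 1) * ((1 - b) * (kk * (- s) / s) + b * (kk * (2* c* W)))^2
       - kk * ((1 - b) * (2 * (- c)) + b * (4* c^2* W))
            * ((1 - b) * (kk * ((- s) * c - kk * (- c) * s) / (2 * s^3)) + b * (kk * (kk - 1) * W))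
       = - (kk^2 * (kk - 1) * D * (1 - b)) / s^2"
proof -
  have "(kk - 1) * ((1 - b) * (kk * (- s) / s) + b * (kk * (2* c* W)))^2
       - kk * ((1 - b) * (2 * (- c)) + b * (4* c^2* W))
            * ((1 - b) * (kk * ((- s) * c - kk * (- c) * s) / (2 * s^3)) + b * (kk * (kk - 1) * W))
       = - (kk^2 * (kk - 1) * D * (1 - b) * (s^2 + c^2)) / s^2"
    using s0 unfolding D_def by (simp add: field_simps power2_eq_square power3_eq_cube)
  thus ?thesis using sc by simp
qed

lemma poly_Pb_vals:
  fixes x :: real
  shows "poly (Pb b k) (complex_of_real x) = (1 - complex_of_real b) * poly (Cp k) (complex_of_real x) + complex_of_real b * complex_of_real x ^ k"
    "poly (pderiv (Pb b k)) (complex_of_real x) = (1 - complex_of_real b) * poly (pderiv (Cp k)) (complex_of_real x) + complex_of_real b * (of_nat k * complex_of_real x ^ (k - 1))"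
    "poly (pderiv (pderiv (Pb b k))) (complex_of_real x) = (1 - complex_of_real b) * poly (pderiv (pderiv (Cp k))) (complex_of_real x)
       + complex_of_real b * (of_nat k * of_nat (k - 1) * complex_of_real x ^ (k - 2))"
proof -
  show "poly (Pb b k) (complex_of_real x) = (1 - complex_of_real b) * poly (Cp k) (complex_of_real x) + complex_of_real b * complex_of_real x ^ k"
    by (simp add: Pb_def poly_monom)
  show "poly (pderiv (Pb b k)) (complex_of_real x) = (1 - complex_of_real b) * poly (pderiv (Cp k)) (complex_of_real x) + complex_of_real b * (of_nat k * complex_of_real x ^ (k - 1))"
    by (simp add: Pb_def pderiv_add pderiv_smult pderiv_monom poly_monom)
  have e: "k - 1 - 1 = k - 2" by simp
  have "pderiv (pderiv (Pb b k)) = smult (1 - complex_of_real b) (pderiv (pderiv (Cp k))) + smult (complex_of_real b) (monom (of_nat (k - 1) * of_nat k) (k - 2))"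
    by (simp only: Pb_def pderiv_add pderiv_smult pderiv_monom e mult_1_right)
  thus "poly (pderiv (pderiv (Pb b k))) (complex_of_real x) = (1 - complex_of_real b) * poly (pderiv (pderiv (Cp k))) (complex_of_real x)
       + complex_of_real b * (of_nat k * of_nat (k - 1) * complex_of_real x ^ (k - 2))"
    by (simp add: poly_monom mult.commute)
qed

lemma hiB3: "hiB 3 = 1"
proof -
  have "pi / real (3 - 1) = pi / 2" by simp
  thus ?thesis by (simp add: hiB_def)
qed

lemma prod_lin_zero:
  fixes r :: "nat \<Rightarrow> complex"
  assumes "i < n"
  shows "poly (\<Prod>j<n. [:- r j, 1:]) (r i) = 0"
  using assms by (auto simp: poly_prod)

lemma mid_case:
  assumes k: "k \<ge> 3" and bh: "hiB k < b" and b1: "b < 1"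
  shows "\<exists>z::complex. (1 - complex_of_real b) * (1 + z ^ k) + complex_of_real b * (1 + z) ^ k = 0 \<and> cmod z \<noteq> 1"
proof -
  have k4: "k \<ge> 4"
  proof (rule ccontr)
    assume "\<not> k \<ge> 4" hence "k = 3" using k by simp
    thus False using bh b1 hiB3 by simp
  qed
  define a where "a = pi / real (k - 1)"
  have k1: "real (k - 1) \<ge> 3" using k4 by linarith
  have a0: "0 < a" using k1 by (simp add: a_def)
  have a3: "a \<le> pi / 3" using k1 unfolding a_def by (simp add: field_simps)
  have ca: "cos a > 0" using a0 a3 by (intro cos_gt_zero_pi) auto
  have sa: "sin a > 0" using a0 a3 by (intro sin_gt_zero) auto
  have ka: "real k * a = pi + a"
  proof -
    have "real k = real (k - 1) + 1" using k by simp
    hence "real k * a = real (k - 1) * a + a" by (metis distrib_right mult_1)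
    also have "real (k - 1) * a = pi" using k1 by (simp add: a_def)
    finally show ?thesis .
  qed
  have cka: "cos (real k * a) = - cos a" and ska: "sin (real k * a) = - sin a"
    unfolding ka by (simp_all add: cos_add sin_add)
  define c where "c = cos a"
  define s where "s = sin a"
  define W where "W = (2 * c) ^ (k - 2)"
  have W1: "(2 * c) ^ (k - 1) = 2 * c * W"
  proof -
    have "k - 1 = Suc (k - 2)" using k by simp
    thus ?thesis by (simp add: W_def)
  qed
  have W0: "(2 * c) ^ k = 4 * c^2 * W"
  proof -
    have "k = Suc (Suc (k - 2))" using k by simp
    hence "(2 * c) ^ k = (2 * c) * ((2 * c) * W)" unfolding W_def by (metis power_Suc)
    thus ?thesis by (simp add: power2_eq_square)
  qed
  define D where "D = b * (2 * c * W) - (1 - b)"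
  have Dpos: "D > 0"
  proof -
    define M where "M = (2 * c) ^ (k - 1)"
    have hi: "hiB k = 1 / (M + 1)" using bounds_basic(6)[OF k] by (simp add: hiB_def M_def c_def a_def)
    have M0: "M \<ge> 0" using ca by (simp add: M_def c_def)
    have "1 < b * (M + 1)" using bh hi M0 by (simp add: field_simps)
    thus ?thesis using W1 by (simp add: D_def M_def algebra_simps)
  qed
  let ?P = "Pb b k"
  have dP: "degree ?P = k" "lead_coeff ?P = 1" using Pb_degree[of k b] k by auto
  obtain root where root: "smult (lead_coeff ?P) (\<Prod>i<degree ?P. [:- root i, 1:]) = ?P"
    using complex_poly_decompose' by blast
  hence Pfac: "?P = (\<Prod>i<k. [:- root i, 1:])" using dP by simp
  show ?thesis
  proof (cases "\<exists>i<k. Im (root i) \<noteq> 0")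
    case True
    then obtain i where i: "i < k" "Im (root i) \<noteq> 0" by auto
    define y where "y = root i"
    have Py: "poly ?P y = 0" unfolding Pfac y_def by (rule prod_lin_zero[OF i(1)])
    define t where "t = (y + csqrt (y^2 - 4)) / 2"
    have tq: "t^2 - y * t + 1 = 0"
    proof -
      define r where "r = csqrt (y^2 - 4)"
      have hr: "r^2 = y^2 - 4" unfolding r_def by (rule power2_csqrt)
      have "t^2 - y * t + 1 = (r^2 - y^2 + 4) / 4"
        unfolding t_def r_def[symmetric] by (simp add: power2_eq_square field_simps)
      also have "\<dots> = 0" using hr by simp
      finally show ?thesis .
    qed
    have t0: "t \<noteq> 0" using tq by auto
    have ty: "t + 1/t = y"
    proof -
      have "t * t + 1 = y * t" using tq by (simp add: power2_eq_square algebra_simps)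
      thus ?thesis using t0 by (simp add: field_simps)
    qed
    show ?thesis
    proof (intro exI conjI)
      show "(1 - complex_of_real b) * (1 + (t^2) ^ k) + complex_of_real b * (1 + t^2) ^ k = 0"
        unfolding q_Pb[OF t0] ty Py by simp
      show "cmod (t^2) \<noteq> 1"
      proof
        assume "cmod (t^2) = 1"
        hence "cmod t = 1 \<or> cmod t = - 1" by (simp add: norm_power power2_eq_1_iff)
        hence t1: "cmod t = 1" by (metis norm_ge_zero neg_0_le_iff_le zero_neq_one le_minus_one_simps(3) linorder_not_le)
        have "t * cnj t = 1" using complex_norm_square[of t] t1 by simp
        hence "1 / t = cnj t" using t0 by (simp add: field_simps)
        hence "y = t + cnj t" using ty by simp
        hence "Im y = 0" by simp
        thus False using i y_def by simp
      qed
    qed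
  next
    case False
    hence real: "\<forall>i<k. root i = complex_of_real (Re (root i))" by (simp add: complex_eq_iff)
    define \<rho> where "\<rho> i = Re (root i)" for i
    have PPr: "?P = Pr \<rho> k" unfolding Pfac Pr_def \<rho>_def
      by (rule prod.cong) (use real in auto)
    define x0 where "x0 = 2 * c"
    have sne: "sin a \<noteq> 0" using sa by simp
    have x0c: "complex_of_real x0 = complex_of_real (2 * cos a)" by (simp add: x0_def c_def)
    have V0: "poly ?P (complex_of_real x0) = complex_of_real ((1 - b) * (2 * (- c)) + b * (4* c^2* W))"
      unfolding poly_Pb_vals(1) x0c Cp_val cka W0[symmetric] by (simp add: c_def)
    have V1: "poly (pderiv ?P) (complex_of_real x0) = complex_of_real ((1 - b) * (real k * (- s) / s) + b * (real k * (2* c* W)))"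
      unfolding poly_Pb_vals(2) x0c Cp_d1[OF sne] ska W1[symmetric] by (simp add: c_def s_def)
    have V2: "poly (pderiv (pderiv ?P)) (complex_of_real x0) =
        complex_of_real ((1 - b) * (real k * ((- s) * c - real k * (- c) * s) / (2 * s^3)) + b * (real k * (real k - 1) * W))"
    proof -
      have "of_nat (k - 1) = complex_of_real (real k - 1)" using k by (simp add: of_nat_diff)
      thus ?thesis unfolding poly_Pb_vals(3) x0c Cp_d2[OF sne] ska cka by (simp add: c_def s_def W_def)
    qed
    have V0ne: "poly ?P (complex_of_real x0) \<noteq> 0"
    proof -
      have "(1 - b) * (2 * (- c)) + b * (4* c^2* W) = 2 * c * D" by (simp add: D_def power2_eq_square algebra_simps)
      moreover have "2 * c * D \<noteq> 0" using Dpos ca by (simp add: c_def)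
      ultimately show ?thesis unfolding V0 by simp
    qed
    have nr: "\<forall>i<k. x0 \<noteq> \<rho> i"
    proof (intro allI impI)
      fix i assume i: "i < k"
      show "x0 \<noteq> \<rho> i"
      proof
        assume "x0 = \<rho> i"
        hence "poly ?P (complex_of_real x0) = 0"
          unfolding PPr Pr_def using prod_lin_zero[OF i, of "\<lambda>j. complex_of_real (\<rho> j)"] by simp
        thus False using V0ne by simp
      qed
    qed
    obtain L where L: "L \<ge> 0" "(of_nat k - 1) * (poly (pderiv (Pr \<rho> k)) (complex_of_real x0))\<^sup>2
          - of_nat k * poly (Pr \<rho> k) (complex_of_real x0) * poly (pderiv (pderiv (Pr \<rho> k))) (complex_of_real x0)
          = complex_of_real L"
      using laguerre[OF nr] by blast
    have sc: "s^2 + c^2 = 1" by (simp add: s_def c_def)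
    have s0: "s \<noteq> 0" using sa by (simp add: s_def)
    have "(of_nat k - 1) * (poly (pderiv (Pr \<rho> k)) (complex_of_real x0))\<^sup>2
          - of_nat k * poly (Pr \<rho> k) (complex_of_real x0) * poly (pderiv (pderiv (Pr \<rho> k))) (complex_of_real x0)
        = complex_of_real (- (real k ^ 2 * (real k - 1) * D * (1 - b)) / s^2)"
      unfolding PPr[symmetric] V0 V1 V2 lag_identity[OF s0 sc, of "real k" b W, folded D_def, symmetric]
      by simp
    hence "L = - (real k ^ 2 * (real k - 1) * D * (1 - b)) / s^2" using L(2) by (metis of_real_eq_iff)
    moreover have "real k ^ 2 * (real k - 1) * D * (1 - b) / s^2 > 0"
      using Dpos b1 k s0 by (intro divide_pos_pos mult_pos_pos) auto
    ultimately show ?thesis using L(1) by simp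
  qed
qed


lemma single_edge:
  assumes m: "m \<ge> 1"
  shows "ising_Z {0..<m} {{0..<m}} b z = (1 - complex_of_real b) * (1 + z ^ m) + complex_of_real b * (1 + z) ^ m"
proof -
  define e :: "nat set" where "e = {0..<m}"
  have fe: "finite e" and ne: "e \<noteq> {}" and ce: "card e = m" using m by (auto simp: e_def)
  have "Zm e {e} (complex_of_real b) (\<lambda>_. z) = Qe e (complex_of_real b) (\<lambda>_. z)"
    unfolding Zm_def Qe_def
  proof (rule sum.cong[OF refl])
    fix S assume "S \<in> Pow e"
    hence "cut_edges e {e} S = (if S \<noteq> {} \<and> S \<noteq> e then {e} else {})"
      unfolding cut_edges_def by auto
    thus "complex_of_real b ^ card (cut_edges e {e} S) * (\<Prod>v\<in>S. z) = dE e (complex_of_real b) S * (\<Prod>v\<in>S. z)"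
      by (simp add: dE_def)
  qed
  also have "\<dots> = (1 - complex_of_real b) * (1 + z ^ m) + complex_of_real b * (1 + z) ^ m"
    unfolding Qe_formula[OF fe ne] using ce by simp
  finally show ?thesis unfolding ising_Zm e_def .
qed

lemma single_edge_hg: "hypergraph {0..<m} {{0..<m::nat}}"
  by (simp add: hypergraph_def)

lemma single_edge_real:
  "ising_Z {0..<m} {{0..<m}} b (complex_of_real x) = complex_of_real ((1 - b) * (1 + x ^ m) + b * (1 + x) ^ m)"
  if "m \<ge> 1"
  using single_edge[OF that] by simp

lemma part2:
  assumes k: "k \<ge> 3" and b1: "b \<noteq> 1" and nr: "\<not> (loB k \<le> b \<and> b \<le> hiB k)"
  shows "\<exists>(V :: nat set) E. hypergraph V E \<and> (\<forall>e\<in>E. card e \<le> k) \<and> (\<exists>z::complex. ising_Z V E b z = 0 \<and> cmod z \<noteq> 1)"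
proof (cases "b < loB k")
  case True
  define f where "f x = (1 - b) * (1 + x ^ k) + b * (1 + x) ^ k" for x :: real
  define N :: real where "N = 2 ^ (k - 1) - 1"
  have N: "N > 0" using bounds_basic(1)[OF k] by (simp add: N_def)
  have "b < - 1 / N" using True by (simp add: loB_def N_def)
  hence bN: "b * N < -1" using N by (simp add: field_simps)
  have p2: "(2::real) ^ k = 2 * 2 ^ (k - 1)" using k by (metis Suc_diff_1 less_le_trans numeral_One numeral_less_iff order.refl power_Suc semiring_norm(76) zero_less_numeral le_neq_implies_less)
  have f1: "f 1 < 0"
  proof -
    have "f 1 = 2 * (1 - b) + b * 2 ^ k" by (simp add: f_def)
    also have "\<dots> = 2 + 2 * (b * N)" by (simp add: p2 N_def algebra_simps)
    finally show ?thesis using bN by simp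
  qed
  have f0: "f 0 = 1" using k by (simp add: f_def power_0_left)
  obtain x where x: "0 \<le> x" "x \<le> 1" "f x = 0"
  proof -
    have cont: "continuous_on {0..1} f" unfolding f_def by (intro continuous_intros)
    show ?thesis using IVT2'[of f 1 0 0, OF _ _ _ cont] f0 f1 that by auto
  qed
  have "x \<noteq> 1" using x f1 by auto
  hence "cmod (complex_of_real x) \<noteq> 1" using x by simp
  moreover have "ising_Z {0..<k} {{0..<k}} b (complex_of_real x) = complex_of_real (f x)"
    unfolding f_def by (rule single_edge_real) (use k in simp)
  hence "ising_Z {0..<k} {{0..<k}} b (complex_of_real x) = 0" using x(3) by simp
  ultimately show ?thesis using single_edge_hg[of k] by fastforce
next
  case False
  hence bh: "hiB k < b" using nr by auto
  show ?thesis
  proof (cases "b < 1")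
    case True
    obtain z where z: "(1 - complex_of_real b) * (1 + z ^ k) + complex_of_real b * (1 + z) ^ k = 0" "cmod z \<noteq> 1"
      using mid_case[OF k bh True] by blast
    have "ising_Z {0..<k} {{0..<k}} b z = 0" using single_edge[of k b z] k z(1) by simp
    thus ?thesis using z(2) single_edge_hg[of k] by fastforce
  next
    case False
    hence bg: "b > 1" using b1 by simp
    define f where "f x = (1 - b) * (1 + x ^ 2) + b * (1 + x) ^ 2" for x :: real
    have fm: "f (-1) < 0" using bg by (simp add: f_def)
    have f0: "f 0 = 1" by (simp add: f_def)
    obtain x where x: "-1 \<le> x" "x \<le> 0" "f x = 0"
    proof -
      have cont: "continuous_on {-1..0} f" unfolding f_def by (intro continuous_intros)
      show ?thesis using IVT'[of f "-1" 0 0, OF _ _ _ cont] fm f0 that by auto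
    qed
    have "x \<noteq> -1" using x fm by auto
    hence "cmod (complex_of_real x) \<noteq> 1" using x by (simp add: abs_if)
    moreover have "ising_Z {0..<2::nat} {{0..<2}} b (complex_of_real x) = complex_of_real (f x)"
      unfolding f_def by (rule single_edge_real) simp
    hence "ising_Z {0..<2::nat} {{0..<2}} b (complex_of_real x) = 0" using x(3) by simp
    moreover have "\<forall>e\<in>{{0..<2::nat}}. card e \<le> k" using k by simp
    ultimately show ?thesis using single_edge_hg[of 2] by fastforce
  qed
qed

theorem theorem1p2:
  fixes k :: nat
  assumes "k \<ge> 3"
  shows "(\<forall>(V :: 'a set) E (b::real).
            hypergraph V E \<longrightarrow> (\<forall>e\<in>E. 2 \<le> card e \<and> card e \<le> k) \<longrightarrow>
            - 1 / (2 ^ (k - 1) - 1) \<le> b \<longrightarrow>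
            b \<le> 1 / (2 ^ (k - 1) * cos (pi / real (k - 1)) ^ (k - 1) + 1) \<longrightarrow>
            (\<forall>z::complex. ising_Z V E b z = 0 \<longrightarrow> cmod z = 1))
       \<and> (\<forall>b::real. b \<noteq> 1 \<longrightarrow>
            \<not> (- 1 / (2 ^ (k - 1) - 1) \<le> b \<and>
               b \<le> 1 / (2 ^ (k - 1) * cos (pi / real (k - 1)) ^ (k - 1) + 1)) \<longrightarrow>
            (\<exists>(V :: nat set) E. hypergraph V E \<and> (\<forall>e\<in>E. card e \<le> k) \<and>
               (\<exists>z::complex. ising_Z V E b z = 0 \<and> cmod z \<noteq> 1)))"
proof (intro conjI allI impI)
  fix V :: "'a set" and E b z
  assume "hypergraph V E" "\<forall>e\<in>E. 2 \<le> card e \<and> card e \<le> k"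
    "- 1 / (2 ^ (k - 1) - 1) \<le> b" "b \<le> 1 / (2 ^ (k - 1) * cos (pi / real (k - 1)) ^ (k - 1) + 1)"
    "ising_Z V E b z = 0"
  thus "cmod z = 1" using part1[OF assms, of V E b z] by (simp add: loB_def hiB_def)
next
  fix b :: real
  assume "b \<noteq> 1" "\<not> (- 1 / (2 ^ (k - 1) - 1) \<le> b \<and>
               b \<le> 1 / (2 ^ (k - 1) * cos (pi / real (k - 1)) ^ (k - 1) + 1))"
  thus "\<exists>(V :: nat set) E. hypergraph V E \<and> (\<forall>e\<in>E. card e \<le> k) \<and>
               (\<exists>z::complex. ising_Z V E b z = 0 \<and> cmod z \<noteq> 1)"
    using part2[OF assms, of b] by (simp add: loB_def hiB_def)
qed


end
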